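(* Let $\mathcal{C}$ be a $\mathbb{Z}_3\mathbb{Z}_9$-additive code of type $(\alpha,\beta;\gamma,\delta;\kappa)$ and let $C=\Phi(\mathcal{C})$, a code of length $n=\alpha+3\beta$ over $\mathbb{Z}_3$. Then: (i) If $\mathbf{u}_1,\ldots,\mathbf{u}_\gamma$ (of order $3$) and $\mathbf{v}_1,\ldots,\mathbf{v}_\delta$ (of order $9$) are the rows of a generator matrix of $\mathcal{C}$, then $\langle C\rangle$ is generated by $\{\Phi(\mathbf{u}_i)\}_{i=1}^\gamma$, $\{\Phi(\mathbf{v}_j)\}_{j=1}^\delta$, $\{\Phi(3\mathbf{v}_k*\mathbf{v}_l)\}_{1\le l\le k\le\delta}$ and $\{\Phi(3\mathbf{v}_x*\mathbf{v}_y*\mathbf{v}_z)\}_{1\le x\le y\le z\le\delta}$. (ii) $\mathrm{rank}(C)\in\left\{\gamma+2\delta,\ldots,\min\left(\beta+\delta+\kappa,\ \gamma+\delta+\binom{\delta+1}{2}+\binom{\delta+2}{3}\right)\right\}$; equivalently, writing $\mathrm{rank}(C)=\gamma+2\delta+\bar r$, we have $\bar r\in\left\{0,1,\ldots,\min\left(\beta-(\gamma-\kappa)-\delta,\ \binom{\delta+1}{2}+\binom{\delta+2}{3}-\delta\right)\right\}$. (iii) The linear code $\langle C\rangle$ over $\mathbb{Z}_3$ is $\mathbb{Z}_3\mathbb{Z}_9$-linear, i.e. $\langle C\rangle=\Phi(\mathcal{D})$ for some $\mathbb{Z}_3\mathbb{Z}_9$-additive code $\mathcal{D}\subseteq\m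athbb{Z}_3^\alpha\times\mathbb{Z}_9^\beta$.
   Context: A $\mathbb{Z}_3\mathbb{Z}_9$-additive code $\mathcal{C}$ is a subgroup of $\mathbb{Z}_3^\alpha\times\mathbb{Z}_9^\beta$ ($\alpha+\beta>0$). As an abelian group $\mathcal{C}\cong\mathbb{Z}_3^\gamma\times\mathbb{Z}_9^\delta$. Let $\mathcal{C}_3$ be the subcode of codewords of order dividing $3$, and $\kappa$ the dimension over $\mathbb{Z}_3$ of the projection of $\mathcal{C}_3$ onto the first $\alpha$ coordinates; then $\mathcal{C}$ is said to be of type $(\alpha,\beta;\gamma,\delta;\kappa)$. A generator matrix of $\mathcal{C}$ has rows $\mathbf{u}_1,\ldots,\mathbf{u}_\gamma$ of order $3$ and $\mathbf{v}_1,\ldots,\mathbf{v}_\delta$ of order $9$ such that every codeword is uniquely $\sum\lambda_i\mathbf{u}_i+\sum\nu_j\mathbf{v}_j$ with $\lambda_i\in\mathbb{Z}_3$, $\nu_j\in\mathbb{Z}_9$. The Gray map $\phi:\mathbb{Z}_9\to\mathbb{Z}_3^3$ is $\phi(\theta)=\theta''(1,1,1)+\theta'(0,1,2)$ where $\theta=3\theta''+\theta'$, $\theta',\theta''\in\{0,1,2\}$, and $\Phi(\mathbf{x},\mathbf{y})=(\mathbf{x},\phi(y_1),\ldots,\phi(y_\beta))$; $C=\Phi(\mathcal{C})$ is a $\mathbb{Z}_3\mathbb{Z}_9$-linear code. $*$ denotes the componentwise product (in $\mathbb{Z}_3$ on the first $\alpha$ coordinates and in $\mathbb{Z}_9$ on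 the last $\beta$), and $3\mathbf{w}$ multiplies every coordinate by $3$ (so the first $\alpha$ coordinates become $0$). $\langle C\rangle$ is the $\mathbb{Z}_3$-linear span of $C$ and $\mathrm{rank}(C)=\dim_{\mathbb{Z}_3}\langle C\rangle$. *)

theory Defs imports Main begin

text \<open>Codewords of Z3^alpha x Z9^beta are pairs of integer lists (x, y) with
  length x = alpha, entries of x in {0,1,2}, length y = beta, entries of y in {0..8}.\<close>

definition space :: "nat \<Rightarrow> nat \<Rightarrow> (int list \<times> int list) set" where
  "space \<alpha> \<beta> = {(x, y). length x = \<alpha> \<and> set x \<subseteq> {0..2} \<and> length y = \<beta> \<and> set y \<subseteq> {0..8}}"

definition zero_cw :: "nat \<Rightarrow> nat \<Rightarrow> int list \<times> int list" where
  "zero_cw \<alpha> \<beta> = (replicate \<alpha> 0, replicate \<beta> 0)"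

definition cw_add :: "int list \<times> int list \<Rightarrow> int list \<times> int list \<Rightarrow> int list \<times> int list" where
  "cw_add a b = (map2 (\<lambda>s t. (s + t) mod 3) (fst a) (fst b),
                 map2 (\<lambda>s t. (s + t) mod 9) (snd a) (snd b))"

definition cw_smul :: "int \<Rightarrow> int list \<times> int list \<Rightarrow> int list \<times> int list" where
  "cw_smul k a = (map (\<lambda>s. (k * s) mod 3) (fst a), map (\<lambda>s. (k * s) mod 9) (snd a))"

definition cw_mult :: "int list \<times> int list \<Rightarrow> int list \<times> int list \<Rightarrow> int list \<times> int list" where
  "cw_mult a b = (map2 (\<lambda>s t. (s * t) mod 3) (fst a) (fst b),
                  map2 (\<lambda>s t. (s * t) mod 9) (snd a) (snd b))"

definition additive_code :: "nat \<Rightarrow> nat \<Rightarrow> (int list \<times> int list) set \<Rightarrow> bool" where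
  "additive_code \<alpha> \<beta> C \<longleftrightarrow> \<alpha> + \<beta> > 0 \<and> C \<subseteq> space \<alpha> \<beta> \<and> zero_cw \<alpha> \<beta> \<in> C \<and>
     (\<forall>a\<in>C. \<forall>b\<in>C. cw_add a b \<in> C)"

definition order3 :: "nat \<Rightarrow> nat \<Rightarrow> int list \<times> int list \<Rightarrow> bool" where
  "order3 \<alpha> \<beta> w \<longleftrightarrow> w \<noteq> zero_cw \<alpha> \<beta> \<and> cw_smul 3 w = zero_cw \<alpha> \<beta>"

definition order9 :: "nat \<Rightarrow> nat \<Rightarrow> int list \<times> int list \<Rightarrow> bool" where
  "order9 \<alpha> \<beta> w \<longleftrightarrow> cw_smul 3 w \<noteq> zero_cw \<alpha> \<beta> \<and> cw_smul 9 w = zero_cw \<alpha> \<beta>"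

definition gen_comb :: "nat \<Rightarrow> nat \<Rightarrow> (int list \<times> int list) list \<Rightarrow> (int list \<times> int list) list
    \<Rightarrow> int list \<Rightarrow> int list \<Rightarrow> int list \<times> int list" where
  "gen_comb \<alpha> \<beta> us vs ls ns =
     foldr cw_add (map2 cw_smul ls us @ map2 cw_smul ns vs) (zero_cw \<alpha> \<beta>)"

definition is_gen_matrix :: "nat \<Rightarrow> nat \<Rightarrow> (int list \<times> int list) set
    \<Rightarrow> (int list \<times> int list) list \<Rightarrow> (int list \<times> int list) list \<Rightarrow> bool" where
  "is_gen_matrix \<alpha> \<beta> C us vs \<longleftrightarrow>
     set us \<subseteq> C \<and> set vs \<subseteq> C \<and>
     (\<forall>u\<in>set us. order3 \<alpha> \<beta> u) \<and> (\<forall>v\<in>set vs. order9 \<alpha> \<beta> v) \<and>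
     bij_betw (\<lambda>(ls, ns). gen_comb \<alpha> \<beta> us vs ls ns)
       ({ls. length ls = length us \<and> set ls \<subseteq> {0..2}} \<times>
        {ns. length ns = length vs \<and> set ns \<subseteq> {0..8}}) C"

text \<open>Linear algebra over Z3 on vectors = int lists of length n with entries in {0,1,2}.\<close>
definition add3 :: "int list \<Rightarrow> int list \<Rightarrow> int list" where
  "add3 x y = map2 (\<lambda>s t. (s + t) mod 3) x y"

definition smul3 :: "int \<Rightarrow> int list \<Rightarrow> int list" where
  "smul3 c x = map (\<lambda>s. (c * s) mod 3) x"

definition lincomb3 :: "nat \<Rightarrow> int list \<Rightarrow> int list list \<Rightarrow> int list" where
  "lincomb3 n cs xs = foldr add3 (map2 smul3 cs xs) (replicate n 0)"

definition span3 :: "nat \<Rightarrow> int list set \<Rightarrow> int list set" where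
  "span3 n S = {lincomb3 n cs xs | cs xs. set xs \<subseteq> S \<and> length cs = length xs \<and> set cs \<subseteq> {0..2}}"

definition dim3 :: "nat \<Rightarrow> int list set \<Rightarrow> nat" where
  "dim3 n V = (LEAST k. \<exists>xs. length xs = k \<and> set xs \<subseteq> V \<and> span3 n (set xs) = V)"

text \<open>Gray map phi : Z9 -> Z3^3, theta = 3 theta'' + theta'.\<close>
definition phi :: "int \<Rightarrow> int list" where
  "phi \<theta> = (let t2 = \<theta> div 3; t1 = \<theta> mod 3 in [t2 mod 3, (t2 + t1) mod 3, (t2 + 2 * t1) mod 3])"

definition Phi :: "int list \<times> int list \<Rightarrow> int list" where
  "Phi w = fst w @ concat (map phi (snd w))"

definition rank3 :: "nat \<Rightarrow> nat \<Rightarrow> (int list \<times> int list) set \<Rightarrow> nat" where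
  "rank3 \<alpha> \<beta> C = dim3 (\<alpha> + 3 * \<beta>) (span3 (\<alpha> + 3 * \<beta>) (Phi ` C))"

definition sub3 :: "nat \<Rightarrow> nat \<Rightarrow> (int list \<times> int list) set \<Rightarrow> (int list \<times> int list) set" where
  "sub3 \<alpha> \<beta> C = {c \<in> C. cw_smul 3 c = zero_cw \<alpha> \<beta>}"

text \<open>C is isomorphic to Z3^gamma x Z9^delta, i.e. it has a generator matrix with gamma rows of
  order 3 and delta rows of order 9; kappa as in the paper.\<close>
definition code_type :: "nat \<Rightarrow> nat \<Rightarrow> nat \<Rightarrow> nat \<Rightarrow> nat \<Rightarrow> (int list \<times> int list) set \<Rightarrow> bool" where
  "code_type \<alpha> \<beta> \<gamma> \<delta> \<kappa> C \<longleftrightarrow> additive_code \<alpha> \<beta> C \<and>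
     (\<exists>us vs. is_gen_matrix \<alpha> \<beta> C us vs \<and> length us = \<gamma> \<and> length vs = \<delta>) \<and>
     \<kappa> = dim3 \<alpha> (fst ` sub3 \<alpha> \<beta> C)"

end

theory Submission imports Defs begin

definition vec3 :: "nat \<Rightarrow> int list set" where
  "vec3 n = {x. length x = n \<and> set x \<subseteq> {0..2}}"

lemma vec3_iff: "x \<in> vec3 n \<longleftrightarrow> length x = n \<and> (\<forall>i<n. 0 \<le> x!i \<and> x!i \<le> 2)"
  by (auto simp: vec3_def set_conv_nth subset_iff)

lemma vec3_nth: "x \<in> vec3 n \<Longrightarrow> i < n \<Longrightarrow> 0 \<le> x!i \<and> x!i \<le> 2"
  by (simp add: vec3_iff)

lemma vec3_len: "x \<in> vec3 n \<Longrightarrow> length x = n"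
  by (simp add: vec3_iff)

lemma vec3_mod: "x \<in> vec3 n \<Longrightarrow> i < n \<Longrightarrow> x!i mod 3 = x!i"
  using vec3_nth[of x n i] by simp

lemma mod3_le2[simp]: "(a::int) mod 3 \<le> 2"
  using pos_mod_bound[of 3 a] by linarith

lemma add3_len[simp]: "length (add3 x y) = min (length x) (length y)"
  by (simp add: add3_def)
lemma add3_nth[simp]: "i < length x \<Longrightarrow> i < length y \<Longrightarrow> add3 x y ! i = (x!i + y!i) mod 3"
  by (simp add: add3_def)
lemma smul3_len[simp]: "length (smul3 c x) = length x"
  by (simp add: smul3_def)
lemma smul3_nth[simp]: "i < length x \<Longrightarrow> smul3 c x ! i = (c * x!i) mod 3"
  by (simp add: smul3_def)

lemma add3_vec: "length x = n \<Longrightarrow> length y = n \<Longrightarrow> add3 x y \<in> vec3 n"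
  by (simp add: vec3_iff)
lemma smul3_vec: "length x = n \<Longrightarrow> smul3 c x \<in> vec3 n"
  by (simp add: vec3_iff)
lemma zero_vec3: "replicate n 0 \<in> vec3 n"
  by (simp add: vec3_iff)

lemma add3_comm: "add3 x y = add3 y x"
  by (rule nth_equalityI) (auto simp: add.commute)

lemma add3_assoc: "length x = n \<Longrightarrow> length y = n \<Longrightarrow> length z = n \<Longrightarrow>
   add3 (add3 x y) z = add3 x (add3 y z)"
  by (rule nth_equalityI) (auto simp: mod_simps add.assoc)

lemma add3_zero: "x \<in> vec3 n \<Longrightarrow> add3 x (replicate n 0) = x"
  by (rule nth_equalityI) (auto simp: vec3_len vec3_mod)

lemma add3_zero_left: "x \<in> vec3 n \<Longrightarrow> add3 (replicate n 0) x = x"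
  using add3_zero add3_comm by metis

lemma add3_neg: "length x = n \<Longrightarrow> add3 x (smul3 2 x) = replicate n 0"
  by (rule nth_equalityI) (auto simp: mod_simps)

lemma smul3_0: "smul3 0 x = replicate (length x) 0"
  by (rule nth_equalityI) auto
lemma smul3_1: "x \<in> vec3 n \<Longrightarrow> smul3 1 x = x"
  by (rule nth_equalityI) (auto simp: vec3_len vec3_mod)
lemma smul3_2: "smul3 2 x = add3 x x"
  by (rule nth_equalityI) (auto simp: mod_simps)

lemma smul3_add3: "length x = length y \<Longrightarrow> smul3 c (add3 x y) = add3 (smul3 c x) (smul3 c y)"
  by (rule nth_equalityI) (auto simp: mod_simps algebra_simps)

lemma smul3_smul3: "smul3 c (smul3 d x) = smul3 (c*d) x"
  by (rule nth_equalityI) (auto simp: mod_simps algebra_simps)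

lemma solve_pt: "0 \<le> z \<Longrightarrow> z \<le> 2 \<Longrightarrow> ((y+z) mod 3 + (2*y) mod 3) mod 3 = (z::int)"
  by presburger

lemma add3_solve: "length y = n \<Longrightarrow> z \<in> vec3 n \<Longrightarrow> x = add3 y z \<Longrightarrow>
   z = add3 x (smul3 2 y)"
  by (rule nth_equalityI) (auto simp: vec3_len solve_pt vec3_nth)


definition closed3 :: "nat \<Rightarrow> int list set \<Rightarrow> bool" where
  "closed3 n Y \<longleftrightarrow> Y \<subseteq> vec3 n \<and> replicate n 0 \<in> Y \<and> (\<forall>x\<in>Y. \<forall>y\<in>Y. add3 x y \<in> Y)"

lemma finite_vec3: "finite (vec3 n)"
proof -
  have "vec3 n = {xs. set xs \<subseteq> {0..2} \<and> length xs = n}" by (auto simp: vec3_def)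
  then show ?thesis by (simp add: finite_lists_length_eq)
qed

lemma closed3_finite: "closed3 n Y \<Longrightarrow> finite Y"
  by (meson closed3_def finite_subset finite_vec3)

lemma closed3_add: "closed3 n Y \<Longrightarrow> x \<in> Y \<Longrightarrow> y \<in> Y \<Longrightarrow> add3 x y \<in> Y"
  by (simp add: closed3_def)
lemma closed3_zero: "closed3 n Y \<Longrightarrow> replicate n 0 \<in> Y"
  by (simp add: closed3_def)
lemma closed3_vec: "closed3 n Y \<Longrightarrow> x \<in> Y \<Longrightarrow> x \<in> vec3 n"
  by (auto simp: closed3_def)

lemma smul3_mod: "smul3 c x = smul3 (c mod 3) x"
  by (rule nth_equalityI) (auto simp: mod_simps)

lemma closed3_smul: assumes "closed3 n Y" "x \<in> Y" shows "smul3 c x \<in> Y"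
proof -
  have xv: "x \<in> vec3 n" using assms closed3_vec by blast
  have "c mod 3 \<in> {0,1,2}" using pos_mod_bound[of 3 c] pos_mod_sign[of 3 c] by auto
  moreover have "smul3 0 x \<in> Y" using smul3_0[of x] vec3_len[OF xv] closed3_zero[OF assms(1)] by simp
  moreover have "smul3 1 x \<in> Y" using smul3_1[OF xv] assms by simp
  moreover have "smul3 2 x \<in> Y" using smul3_2[of x] closed3_add[OF assms(1) assms(2) assms(2)] by simp
  ultimately show ?thesis using smul3_mod[of c x] by auto
qed

lemma vec3_closed: "closed3 n (vec3 n)"
  by (auto simp: closed3_def zero_vec3 vec3_len intro: add3_vec)

lemma lincomb3_Nil[simp]: "lincomb3 n [] [] = replicate n 0"
  by (simp add: lincomb3_def)
lemma lincomb3_Cons[simp]: "lincomb3 n (c#cs) (x#xs) = add3 (smul3 c x) (lincomb3 n cs xs)"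
  by (simp add: lincomb3_def)

lemma lincomb3_in: "closed3 n Y \<Longrightarrow> set xs \<subseteq> Y \<Longrightarrow> length cs = length xs \<Longrightarrow> lincomb3 n cs xs \<in> Y"
proof (induction xs arbitrary: cs)
  case Nil then show ?case by (simp add: closed3_zero)
next
  case (Cons x xs)
  then obtain c cs' where "cs = c # cs'" by (cases cs) auto
  with Cons show ?case by (auto intro!: closed3_add closed3_smul)
qed

lemma span_least: "X \<subseteq> Y \<Longrightarrow> closed3 n Y \<Longrightarrow> span3 n X \<subseteq> Y"
  unfolding span3_def using lincomb3_in by blast


lemma lincomb3_vec: "set xs \<subseteq> vec3 n \<Longrightarrow> length cs = length xs \<Longrightarrow> lincomb3 n cs xs \<in> vec3 n"
  using lincomb3_in[OF vec3_closed] by blast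

lemma lincomb3_append: "set xs \<subseteq> vec3 n \<Longrightarrow> set ys \<subseteq> vec3 n \<Longrightarrow> length cs = length xs \<Longrightarrow> length ds = length ys \<Longrightarrow>
  lincomb3 n (cs @ ds) (xs @ ys) = add3 (lincomb3 n cs xs) (lincomb3 n ds ys)"
proof (induction xs arbitrary: cs)
  case Nil then show ?case using add3_zero_left lincomb3_vec by simp
next
  case (Cons x xs)
  then obtain c cs' where cs: "cs = c # cs'" by (cases cs) auto
  have l1: "length (smul3 c x) = n" using Cons.prems vec3_len by auto
  have l2: "length (lincomb3 n cs' xs) = n" using Cons.prems cs vec3_len lincomb3_vec by auto
  have l3: "length (lincomb3 n ds ys) = n" using Cons.prems cs vec3_len lincomb3_vec by auto
  show ?case using Cons cs add3_assoc[OF l1 l2 l3] by simp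
qed

lemma span_closed: assumes "X \<subseteq> vec3 n" shows "closed3 n (span3 n X)"
  unfolding closed3_def
proof (intro conjI ballI)
  show "span3 n X \<subseteq> vec3 n" using span_least[OF assms vec3_closed] .
  show "replicate n 0 \<in> span3 n X" unfolding span3_def by (rule CollectI, rule exI[of _ "[]"], auto)
  fix x y assume "x \<in> span3 n X" "y \<in> span3 n X"
  then obtain cs xs ds ys where x: "x = lincomb3 n cs xs" "set xs \<subseteq> X" "length cs = length xs" "set cs \<subseteq> {0..2}"
    and y: "y = lincomb3 n ds ys" "set ys \<subseteq> X" "length ds = length ys" "set ds \<subseteq> {0..2}"
    unfolding span3_def by blast
  have "add3 x y = lincomb3 n (cs @ ds) (xs @ ys)"
    using lincomb3_append[of xs n ys cs ds] x y assms by auto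
  then show "add3 x y \<in> span3 n X" unfolding span3_def using x y by fastforce
qed

lemma span_sup: assumes "X \<subseteq> vec3 n" shows "X \<subseteq> span3 n X"
proof
  fix x assume x: "x \<in> X"
  have "lincomb3 n [1] [x] = x" using x assms add3_zero smul3_1 by (auto simp: lincomb3_def)
  then show "x \<in> span3 n X" unfolding span3_def using x by (intro CollectI exI[of _ "[1]"] exI[of _ "[x]"]) auto
qed

lemma span_closed_eq: "closed3 n Y \<Longrightarrow> span3 n Y = Y"
  using span_least[of Y Y n] span_sup[of Y n] by (auto simp: closed3_def)

lemma span_mono: "X \<subseteq> Y \<Longrightarrow> span3 n X \<subseteq> span3 n Y"
  unfolding span3_def by blast

lemma span_in: "X \<subseteq> vec3 n \<Longrightarrow> x \<in> X \<Longrightarrow> x \<in> span3 n X"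
  using span_sup by blast

definition spanL :: "nat \<Rightarrow> int list list \<Rightarrow> int list set" where
  "spanL n xs = {lincomb3 n cs xs | cs. length cs = length xs \<and> set cs \<subseteq> {0..2}}"

lemma spanL_card: "card (spanL n xs) \<le> 3 ^ length xs"
proof -
  let ?A = "{cs. length cs = length xs \<and> set cs \<subseteq> {0..2::int}}"
  have e: "spanL n xs = (\<lambda>cs. lincomb3 n cs xs) ` ?A"
    unfolding spanL_def setcompr_eq_image by simp
  have A: "?A = {cs. set cs \<subseteq> {0..2::int} \<and> length cs = length xs}" by blast
  have "card ?A = 3 ^ length xs" unfolding A by (simp add: card_lists_length_eq)
  moreover have "finite ?A" unfolding A by (simp add: finite_lists_length_eq)
  ultimately show ?thesis unfolding e using card_image_le[of ?A "\<lambda>cs. lincomb3 n cs xs"] by simp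
qed

lemma spanL_Nil: "spanL n [] = {replicate n 0}"
  by (auto simp: spanL_def)

lemma spanL_Cons: "spanL n (x#xs) = {add3 (smul3 c x) s | c s. c \<in> {0..2} \<and> s \<in> spanL n xs}"
  unfolding spanL_def
  apply (auto)
  subgoal for cs by (cases cs) auto
  subgoal for c cs by (rule exI[of _ "c#cs"]) auto
  done

lemma spanL_ConsI: "c \<in> {0..2} \<Longrightarrow> s \<in> spanL n xs \<Longrightarrow> add3 (smul3 c x) s \<in> spanL n (x#xs)"
  unfolding spanL_Cons by blast

lemma pt_add: "(((c*x) mod 3 + s) mod 3 + ((d*x) mod 3 + t) mod 3) mod 3 = ((((c+d) mod 3) * x) mod 3 + (s+t) mod 3) mod (3::int)"
proof -
  have "(((c*x) mod 3 + s) mod 3 + ((d*x) mod 3 + t) mod 3) mod 3 = (c*x + s + (d*x + t)) mod 3"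
    by (simp only: mod_add_eq mod_mult_left_eq mod_add_left_eq mod_add_right_eq)
  also have "\<dots> = ((c+d)*x + (s+t)) mod 3" by (simp add: algebra_simps)
  also have "\<dots> = ((((c+d) mod 3) * x) mod 3 + (s+t) mod 3) mod (3::int)"
    by (simp only: mod_add_eq mod_mult_left_eq mod_add_left_eq mod_add_right_eq)
  finally show ?thesis .
qed

lemma spanL_closed: "set xs \<subseteq> vec3 n \<Longrightarrow> closed3 n (spanL n xs) \<and> set xs \<subseteq> spanL n xs"
proof (induction xs)
  case Nil then show ?case by (auto simp: spanL_Nil closed3_def zero_vec3 add3_zero)
next
  case (Cons x xs)
  have xv: "x \<in> vec3 n" using Cons by auto
  have IH: "closed3 n (spanL n xs)" "set xs \<subseteq> spanL n xs" using Cons by auto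
  have sub: "spanL n (x#xs) \<subseteq> vec3 n"
    using IH(1) xv by (auto simp: spanL_Cons closed3_def vec3_len intro!: add3_vec)
  have zero: "replicate n 0 \<in> spanL n (x#xs)"
  proof -
    have "add3 (smul3 0 x) (replicate n 0) = replicate n 0"
      using smul3_0[of x] vec3_len[OF xv] add3_zero[OF zero_vec3] by simp
    then show ?thesis using spanL_ConsI[of 0 "replicate n 0" n xs x] closed3_zero[OF IH(1)] by simp
  qed
  have add: "add3 a b \<in> spanL n (x#xs)" if a: "a \<in> spanL n (x#xs)" and b: "b \<in> spanL n (x#xs)" for a b
  proof -
    obtain c s d t where a': "a = add3 (smul3 c x) s" "c \<in> {0..2}" "s \<in> spanL n xs"
      and b': "b = add3 (smul3 d x) t" "d \<in> {0..2}" "t \<in> spanL n xs"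
      using a b unfolding spanL_Cons by blast
    have sv: "s \<in> vec3 n" "t \<in> vec3 n" using a' b' IH closed3_vec by blast+
    have "add3 a b = add3 (smul3 ((c+d) mod 3) x) (add3 s t)"
      using a' b' sv xv by (intro nth_equalityI) (auto simp: vec3_len pt_add)
    moreover have "(c+d) mod 3 \<in> {0..2}" by simp
    moreover have "add3 s t \<in> spanL n xs" using closed3_add[OF IH(1)] a' b' by blast
    ultimately show ?thesis using spanL_ConsI[of "(c+d) mod 3" "add3 s t" n xs x] by simp
  qed
  have xin: "x \<in> spanL n (x#xs)"
  proof -
    have "add3 (smul3 1 x) (replicate n 0) = x" using smul3_1[OF xv] add3_zero[OF xv] by simp
    then show ?thesis using spanL_ConsI[of 1 "replicate n 0" n xs x] closed3_zero[OF IH(1)] by simp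
  qed
  have xsin: "set xs \<subseteq> spanL n (x#xs)"
  proof
    fix y assume "y \<in> set xs"
    then have y: "y \<in> spanL n xs" "y \<in> vec3 n" using IH Cons.prems by auto
    have "add3 (smul3 0 x) y = y" using smul3_0[of x] vec3_len[OF xv] add3_zero_left[OF y(2)] by simp
    then show "y \<in> spanL n (x#xs)" using spanL_ConsI[of 0 y n xs x] y by simp
  qed
  show ?case using sub zero add xin xsin by (auto simp: closed3_def)
qed

lemma span3_set_eq: "set xs \<subseteq> vec3 n \<Longrightarrow> span3 n (set xs) = spanL n xs"
proof -
  assume xs: "set xs \<subseteq> vec3 n"
  have c: "closed3 n (spanL n xs)" "set xs \<subseteq> spanL n xs" using spanL_closed[OF xs] by auto
  show ?thesis
  proof
    show "span3 n (set xs) \<subseteq> spanL n xs" using span_least[OF c(2) c(1)] .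
    show "spanL n xs \<subseteq> span3 n (set xs)"
    proof
      fix y assume "y \<in> spanL n xs"
      then obtain cs where "y = lincomb3 n cs xs" "length cs = length xs" "set cs \<subseteq> {0..2}"
        unfolding spanL_def by auto
      then show "y \<in> span3 n (set xs)" unfolding span3_def by auto
    qed
  qed
qed

lemma pt_inj: "c \<in> {0..2} \<Longrightarrow> d \<in> {0..2} \<Longrightarrow> c \<noteq> d \<Longrightarrow> x \<in> {0..2} \<Longrightarrow> s \<in> {0..2} \<Longrightarrow> t \<in> {0..2} \<Longrightarrow>
   (c*x mod 3 + s) mod 3 = (d*x mod 3 + t) mod 3 \<Longrightarrow> x = ((c-d)*((t + (2*s) mod 3) mod 3)) mod (3::int)"
proof -
  assume "c \<in> {0..2}" "d \<in> {0..2}" "c \<noteq> d" "x \<in> {0..2}" "s \<in> {0..2}" "t \<in> {0..2}" and h: "(c*x mod 3 + s) mod 3 = (d*x mod 3 + t) mod 3"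
  then have "c \<in> {0,1,2}" "d \<in> {0,1,2}" "x \<in> {0,1,2}" "s \<in> {0,1,2}" "t \<in> {0,1,2}" by auto
  then show ?thesis using h \<open>c \<noteq> d\<close> by auto
qed

lemma pt_cancel: "0 \<le> s \<Longrightarrow> s \<le> 2 \<Longrightarrow> 0 \<le> t \<Longrightarrow> t \<le> 2 \<Longrightarrow> (a + s) mod 3 = (a + t) mod 3 \<Longrightarrow> s = (t::int)"
proof -
  assume "0 \<le> s" "s \<le> 2" "0 \<le> t" "t \<le> 2" and h: "(a + s) mod 3 = (a + t) mod 3"
  have "((a + s) - a) mod 3 = ((a + t) - a) mod 3" using h by (metis mod_diff_left_eq)
  then have "s mod 3 = t mod 3" by simp
  then show ?thesis using \<open>0 \<le> s\<close> \<open>s \<le> 2\<close> \<open>0 \<le> t\<close> \<open>t \<le> 2\<close> by simp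
qed

lemma spanL_cons_card:
  assumes xs: "set (x#xs) \<subseteq> vec3 n" and nx: "x \<notin> spanL n xs"
  shows "card (spanL n (x#xs)) = 3 * card (spanL n xs)"
proof -
  have cl: "closed3 n (spanL n xs)" using spanL_closed xs by auto
  have xv: "x \<in> vec3 n" using xs by auto
  have eq: "spanL n (x#xs) = (\<lambda>(c,s). add3 (smul3 c x) s) ` ({0..2} \<times> spanL n xs)"
    unfolding spanL_Cons by (auto simp: image_def) blast
  have inj: "inj_on (\<lambda>(c,s). add3 (smul3 c x) s) ({0..2} \<times> spanL n xs)"
  proof (rule inj_onI, clarify)
    fix c s d t assume c: "c \<in> {0..2::int}" "s \<in> spanL n xs" and d: "d \<in> {0..2::int}" "t \<in> spanL n xs"
      and e: "add3 (smul3 c x) s = add3 (smul3 d x) t"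
    have sv: "s \<in> vec3 n" "t \<in> vec3 n" using c d cl closed3_vec by blast+
    have pt: "(c * x!i mod 3 + s!i) mod 3 = (d * x!i mod 3 + t!i) mod 3" if "i < n" for i
      using arg_cong[OF e, of "\<lambda>l. l!i"] that sv xv by (simp add: vec3_len)
    show "c = d \<and> s = t"
    proof (cases "c = d")
      case True
      have "s = t"
      proof (rule nth_equalityI)
        show "length s = length t" using sv by (simp add: vec3_len)
        fix i assume "i < length s"
        then have i: "i < n" using sv vec3_len by auto
        show "s ! i = t ! i"
          using pt_cancel[of "s!i" "t!i" "c * x!i mod 3"] pt[OF i] True vec3_nth[OF sv(1) i] vec3_nth[OF sv(2) i] by simp
      qed
      with True show ?thesis by simp
    next
      case False
      have "x = smul3 (c-d) (add3 t (smul3 2 s))"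
      proof (rule nth_equalityI)
        show "length x = length (smul3 (c - d) (add3 t (smul3 2 s)))" using sv xv by (simp add: vec3_len)
        fix i assume "i < length x"
        then have i: "i < n" using xv vec3_len by auto
        show "x ! i = smul3 (c - d) (add3 t (smul3 2 s)) ! i"
          using pt_inj[OF c(1) d(1) False _ _ _ pt[OF i]] vec3_nth[OF xv i] vec3_nth[OF sv(1) i] vec3_nth[OF sv(2) i]
            i sv by (simp add: vec3_len)
      qed
      moreover have "smul3 (c-d) (add3 t (smul3 2 s)) \<in> spanL n xs"
        using cl c d by (intro closed3_smul closed3_add) auto
      ultimately show ?thesis using nx by simp
    qed
  qed
  have "finite (spanL n xs)"
    using cl finite_subset[OF _ finite_vec3] by (auto simp: closed3_def)
  then show ?thesis using card_image[OF inj] eq by (simp add: card_cartesian_product)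
qed


lemma closed3_sub_vec: "closed3 n V \<Longrightarrow> V \<subseteq> vec3 n"
  by (simp add: closed3_def)

lemma spanL_sub: "closed3 n V \<Longrightarrow> set xs \<subseteq> V \<Longrightarrow> spanL n xs \<subseteq> V"
proof -
  assume V: "closed3 n V" and xs: "set xs \<subseteq> V"
  have "set xs \<subseteq> vec3 n" using xs closed3_sub_vec[OF V] by blast
  then have "spanL n xs = span3 n (set xs)" using span3_set_eq by blast
  then show ?thesis using span_least[OF xs V] by simp
qed

lemma greedy_aux:
  assumes V: "closed3 n V"
  shows "set xs \<subseteq> V \<Longrightarrow> card (spanL n xs) = 3^length xs \<Longrightarrow>
     \<exists>ys. set ys \<subseteq> V \<and> spanL n ys = V \<and> card V = 3^length ys"
proof (induction "card V - card (spanL n xs)" arbitrary: xs rule: less_induct)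
  case less
  have sub: "spanL n xs \<subseteq> V" using spanL_sub[OF V less.prems(1)] .
  show ?case
  proof (cases "spanL n xs = V")
    case True
    show ?thesis by (rule exI[of _ xs]) (use True less.prems in simp)
  next
    case False
    then obtain x where x: "x \<in> V" "x \<notin> spanL n xs" using sub by blast
    have xsv: "set (x#xs) \<subseteq> vec3 n" using x less.prems(1) closed3_sub_vec[OF V] by (simp add: subset_iff)
    have c: "card (spanL n (x#xs)) = 3 * card (spanL n xs)" using spanL_cons_card[OF xsv x(2)] .
    have sub2: "spanL n (x#xs) \<subseteq> V" using spanL_sub[OF V, of "x#xs"] x less.prems(1) by simp
    have fin: "finite V" using closed3_finite[OF V] .
    have pos: "card (spanL n xs) > 0" using less.prems(2) by simp
    have le: "card (spanL n (x#xs)) \<le> card V" using card_mono[OF fin sub2] .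
    have lt: "card V - card (spanL n (x#xs)) < card V - card (spanL n xs)" using c pos le by linarith
    have c2: "card (spanL n (x#xs)) = 3 ^ length (x#xs)" using c less.prems(2) by simp
    have "set (x#xs) \<subseteq> V" using x less.prems(1) by simp
    then show ?thesis using less.hyps[OF lt _ c2] by blast
  qed
qed

lemma greedy:
  assumes V: "closed3 n V"
  shows "\<exists>ys. set ys \<subseteq> V \<and> spanL n ys = V \<and> card V = 3^length ys"
proof -
  have "card (spanL n []) = 3 ^ length ([]::int list list)" by (simp add: spanL_Nil)
  then show ?thesis using greedy_aux[OF V, of "[]"] by simp
qed

lemma dim3_card:
  assumes V: "closed3 n V"
  shows "card V = 3 ^ dim3 n V"
proof -
  obtain xs where xs: "set xs \<subseteq> V" "spanL n xs = V" "card V = 3^length xs" using greedy[OF V] by blast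
  have xsv: "set xs \<subseteq> vec3 n" using xs(1) closed3_sub_vec[OF V] by blast
  let ?P = "\<lambda>k. \<exists>xs. length xs = k \<and> set xs \<subseteq> V \<and> span3 n (set xs) = V"
  have P: "?P (length xs)" using xs span3_set_eq[OF xsv] by auto
  have d: "dim3 n V = (LEAST k. ?P k)" unfolding dim3_def ..
  have le: "dim3 n V \<le> length xs" unfolding d using Least_le[of ?P, OF P] .
  obtain ys where ys: "length ys = dim3 n V" "set ys \<subseteq> V" "span3 n (set ys) = V"
    using LeastI[of ?P, OF P] unfolding d by blast
  have ysv: "set ys \<subseteq> vec3 n" using ys(2) closed3_sub_vec[OF V] by blast
  have "card V \<le> 3 ^ dim3 n V" using spanL_card[of n ys] ys span3_set_eq[OF ysv] by simp
  moreover have "3 ^ dim3 n V \<le> (3::nat) ^ length xs" using le by (simp add: power_increasing)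
  ultimately show ?thesis using xs(3) by simp
qed

lemma dim3_le_iff:
  assumes V: "closed3 n V" shows "dim3 n V \<le> m \<longleftrightarrow> card V \<le> 3 ^ m"
proof -
  have "dim3 n V \<le> m \<longleftrightarrow> (3::nat) ^ dim3 n V \<le> 3 ^ m" by (rule power_increasing_iff[symmetric]) simp
  then show ?thesis using dim3_card[OF V] by simp
qed

lemma dim3_le_list:
  assumes V: "closed3 n V" "set xs \<subseteq> vec3 n" "V \<subseteq> span3 n (set xs)"
  shows "dim3 n V \<le> length xs"
proof -
  have cl: "closed3 n (spanL n xs)" using spanL_closed[OF V(2)] by blast
  have "V \<subseteq> spanL n xs" using V(3) span3_set_eq[OF V(2)] by simp
  then have "card V \<le> card (spanL n xs)" using card_mono[OF closed3_finite[OF cl]] by blast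
  also have "\<dots> \<le> 3 ^ length xs" by (rule spanL_card)
  finally show ?thesis using dim3_le_iff[OF V(1)] by blast
qed


lemma space_iff: "a \<in> space \<alpha> \<beta> \<longleftrightarrow> length (fst a) = \<alpha> \<and> (\<forall>i<\<alpha>. 0 \<le> fst a!i \<and> fst a!i \<le> 2) \<and>
   length (snd a) = \<beta> \<and> (\<forall>i<\<beta>. 0 \<le> snd a!i \<and> snd a!i \<le> 8)"
  by (cases a) (auto simp: space_def set_conv_nth subset_iff)

lemma space_fst: "a \<in> space \<alpha> \<beta> \<Longrightarrow> fst a \<in> vec3 \<alpha>"
  by (simp add: space_iff vec3_iff)
lemma space_len1: "a \<in> space \<alpha> \<beta> \<Longrightarrow> length (fst a) = \<alpha>"
  by (simp add: space_iff)
lemma space_len2: "a \<in> space \<alpha> \<beta> \<Longrightarrow> length (snd a) = \<beta>"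
  by (simp add: space_iff)
lemma space_nth1: "a \<in> space \<alpha> \<beta> \<Longrightarrow> i < \<alpha> \<Longrightarrow> 0 \<le> fst a!i \<and> fst a!i \<le> 2"
  by (simp add: space_iff)
lemma space_nth2: "a \<in> space \<alpha> \<beta> \<Longrightarrow> i < \<beta> \<Longrightarrow> 0 \<le> snd a!i \<and> snd a!i \<le> 8"
  by (simp add: space_iff)
lemma space_mod1: "a \<in> space \<alpha> \<beta> \<Longrightarrow> i < \<alpha> \<Longrightarrow> fst a!i mod 3 = fst a!i"
  using space_nth1[of a \<alpha> \<beta> i] by simp
lemma space_mod2: "a \<in> space \<alpha> \<beta> \<Longrightarrow> i < \<beta> \<Longrightarrow> snd a!i mod 9 = snd a!i"
  using space_nth2[of a \<alpha> \<beta> i] by simp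

lemma mod9_le8[simp]: "(a::int) mod 9 \<le> 8"
  using pos_mod_bound[of 9 a] by linarith

lemma fst_cw_add: "fst (cw_add a b) = add3 (fst a) (fst b)"
  by (simp add: cw_add_def add3_def)
lemma len_snd_cw_add[simp]: "length (snd (cw_add a b)) = min (length (snd a)) (length (snd b))"
  by (simp add: cw_add_def)
lemma snd_cw_add_nth[simp]: "i < length (snd a) \<Longrightarrow> i < length (snd b) \<Longrightarrow> snd (cw_add a b) ! i = (snd a!i + snd b!i) mod 9"
  by (simp add: cw_add_def)

lemma fst_cw_smul: "fst (cw_smul k a) = smul3 k (fst a)"
  by (simp add: cw_smul_def smul3_def)
lemma len_snd_cw_smul[simp]: "length (snd (cw_smul k a)) = length (snd a)"
  by (simp add: cw_smul_def)
lemma snd_cw_smul_nth[simp]: "i < length (snd a) \<Longrightarrow> snd (cw_smul k a) ! i = (k * snd a!i) mod 9"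
  by (simp add: cw_smul_def)

lemma len_fst_cw_mult[simp]: "length (fst (cw_mult a b)) = min (length (fst a)) (length (fst b))"
  by (simp add: cw_mult_def)
lemma fst_cw_mult_nth[simp]: "i < length (fst a) \<Longrightarrow> i < length (fst b) \<Longrightarrow> fst (cw_mult a b) ! i = (fst a!i * fst b!i) mod 3"
  by (simp add: cw_mult_def)
lemma len_snd_cw_mult[simp]: "length (snd (cw_mult a b)) = min (length (snd a)) (length (snd b))"
  by (simp add: cw_mult_def)
lemma snd_cw_mult_nth[simp]: "i < length (snd a) \<Longrightarrow> i < length (snd b) \<Longrightarrow> snd (cw_mult a b) ! i = (snd a!i * snd b!i) mod 9"
  by (simp add: cw_mult_def)

lemma fst_zero_cw[simp]: "fst (zero_cw \<alpha> \<beta>) = replicate \<alpha> 0"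
  by (simp add: zero_cw_def)
lemma snd_zero_cw[simp]: "snd (zero_cw \<alpha> \<beta>) = replicate \<beta> 0"
  by (simp add: zero_cw_def)

lemma cw_eqI: "fst a = fst b \<Longrightarrow> snd a = snd b \<Longrightarrow> a = b"
  by (rule prod_eqI)

lemma zero_space: "zero_cw \<alpha> \<beta> \<in> space \<alpha> \<beta>"
  by (simp add: space_iff)

lemma cw_add_space: "a \<in> space \<alpha> \<beta> \<Longrightarrow> b \<in> space \<alpha> \<beta> \<Longrightarrow> cw_add a b \<in> space \<alpha> \<beta>"
  by (simp add: space_iff fst_cw_add)

lemma cw_smul_space: "a \<in> space \<alpha> \<beta> \<Longrightarrow> cw_smul k a \<in> space \<alpha> \<beta>"
  by (simp add: space_iff fst_cw_smul)

lemma cw_add_comm: "cw_add a b = cw_add b a"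
  apply (rule cw_eqI)
   apply (simp add: fst_cw_add add3_comm)
  apply (rule nth_equalityI)
   apply (simp_all add: add.commute)
  done

lemma cw_add_assoc: "a \<in> space \<alpha> \<beta> \<Longrightarrow> b \<in> space \<alpha> \<beta> \<Longrightarrow> c \<in> space \<alpha> \<beta> \<Longrightarrow>
  cw_add (cw_add a b) c = cw_add a (cw_add b c)"
  apply (rule cw_eqI)
   apply (simp add: fst_cw_add add3_assoc space_len1)
  apply (rule nth_equalityI)
   apply (simp add: space_len2)
  apply (simp add: space_len2 mod_simps add.assoc)
  done

lemma cw_add_zero: "a \<in> space \<alpha> \<beta> \<Longrightarrow> cw_add a (zero_cw \<alpha> \<beta>) = a"
  apply (rule cw_eqI)
   apply (simp add: fst_cw_add add3_zero space_fst)
  apply (rule nth_equalityI)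
   apply (simp add: space_len2)
  apply (simp add: space_len2 space_mod2)
  done

lemma cw_add_zero_left: "a \<in> space \<alpha> \<beta> \<Longrightarrow> cw_add (zero_cw \<alpha> \<beta>) a = a"
  using cw_add_zero cw_add_comm by metis

definition cw_neg :: "int list \<times> int list \<Rightarrow> int list \<times> int list" where
  "cw_neg a = cw_smul 8 a"

lemma cw_neg_space: "a \<in> space \<alpha> \<beta> \<Longrightarrow> cw_neg a \<in> space \<alpha> \<beta>"
  by (simp add: cw_neg_def cw_smul_space)

lemma neg_pt3: "((x::int) + (8 * x) mod 3) mod 3 = 0"
proof -
  have "(x + (8 * x) mod 3) mod 3 = (x + 8*x) mod 3" by (simp only: mod_add_right_eq)
  also have "x + 8*x = 3*(3*x)" by simp
  finally show ?thesis by simp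
qed
lemma neg_pt9: "((x::int) + (8 * x) mod 9) mod 9 = 0"
proof -
  have "(x + (8 * x) mod 9) mod 9 = (x + 8*x) mod 9" by (simp only: mod_add_right_eq)
  also have "x + 8*x = 9*x" by simp
  finally show ?thesis by simp
qed

lemma cw_add_neg: "a \<in> space \<alpha> \<beta> \<Longrightarrow> cw_add a (cw_neg a) = zero_cw \<alpha> \<beta>"
  apply (rule cw_eqI)
   apply (rule nth_equalityI)
    apply (simp add: space_len1 fst_cw_add fst_cw_smul cw_neg_def)
   apply (simp add: space_len1 fst_cw_add fst_cw_smul cw_neg_def neg_pt3)
  apply (rule nth_equalityI)
   apply (simp add: space_len2 cw_neg_def)
  apply (simp add: space_len2 cw_neg_def neg_pt9)
  done

lemma cw_smul_0: "a \<in> space \<alpha> \<beta> \<Longrightarrow> cw_smul 0 a = zero_cw \<alpha> \<beta>"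
  apply (rule cw_eqI)
   apply (simp add: fst_cw_smul smul3_0 space_len1)
  apply (rule nth_equalityI)
   apply (simp_all add: space_len2)
  done

lemma cw_smul_Suc: "a \<in> space \<alpha> \<beta> \<Longrightarrow> cw_smul (k + 1) a = cw_add a (cw_smul k a)"
  apply (rule cw_eqI)
   apply (rule nth_equalityI)
    apply (simp add: fst_cw_add fst_cw_smul)
   apply (simp add: fst_cw_add fst_cw_smul mod_simps algebra_simps)
  apply (rule nth_equalityI)
   apply (simp)
  apply (simp add: mod_simps algebra_simps)
  done

lemma additive_smul:
  assumes C: "additive_code \<alpha> \<beta> C" and a: "a \<in> C"
  shows "cw_smul (int k) a \<in> C"
proof (induction k)
  case 0
  have "a \<in> space \<alpha> \<beta>" using C a by (auto simp: additive_code_def)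
  then show ?case using cw_smul_0 C by (simp add: additive_code_def)
next
  case (Suc k)
  have as: "a \<in> space \<alpha> \<beta>" using C a by (auto simp: additive_code_def)
  have "cw_smul (int (Suc k)) a = cw_add a (cw_smul (int k) a)" using cw_smul_Suc[OF as, of "int k"] by (simp add: add.commute)
  then show ?case using Suc C a by (simp add: additive_code_def)
qed

lemma additive_neg: "additive_code \<alpha> \<beta> C \<Longrightarrow> a \<in> C \<Longrightarrow> cw_neg a \<in> C"
  using additive_smul[of \<alpha> \<beta> C a 8] by (simp add: cw_neg_def)

lemma additive_space: "additive_code \<alpha> \<beta> C \<Longrightarrow> a \<in> C \<Longrightarrow> a \<in> space \<alpha> \<beta>"
  by (auto simp: additive_code_def)

lemma additive_add: "additive_code \<alpha> \<beta> C \<Longrightarrow> a \<in> C \<Longrightarrow> b \<in> C \<Longrightarrow> cw_add a b \<in> C"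
  by (auto simp: additive_code_def)

lemma additive_zero: "additive_code \<alpha> \<beta> C \<Longrightarrow> zero_cw \<alpha> \<beta> \<in> C"
  by (auto simp: additive_code_def)

lemma cw_cancel: "a \<in> space \<alpha> \<beta> \<Longrightarrow> b \<in> space \<alpha> \<beta> \<Longrightarrow> c \<in> space \<alpha> \<beta> \<Longrightarrow>
   cw_add a c = cw_add b c \<Longrightarrow> a = b"
proof -
  assume s: "a \<in> space \<alpha> \<beta>" "b \<in> space \<alpha> \<beta>" "c \<in> space \<alpha> \<beta>" and e: "cw_add a c = cw_add b c"
  have "cw_add (cw_add a c) (cw_neg c) = cw_add (cw_add b c) (cw_neg c)" using e by simp
  then show "a = b" using s cw_add_assoc[of _ \<alpha> \<beta> c "cw_neg c"] cw_neg_space cw_add_neg cw_add_zero by metis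
qed


definition rep3 :: "int \<Rightarrow> int list" where "rep3 q = [q, q, q]"

definition Qf :: "int \<Rightarrow> int \<Rightarrow> int" where "Qf s t = (s*t + s*s*t + s*t*t) mod 3"

definition Eg :: "nat \<Rightarrow> nat \<Rightarrow> (nat \<Rightarrow> int) \<Rightarrow> int list" where
  "Eg \<alpha> \<beta> h = replicate \<alpha> 0 @ concat (map (\<lambda>i. rep3 (h i mod 3)) [0..<\<beta>])"

lemma phi_len[simp]: "length (phi s) = 3"
  by (simp add: phi_def Let_def)
lemma rep3_len[simp]: "length (rep3 s) = 3"
  by (simp add: rep3_def)

lemma len_concat3: "(\<forall>i\<in>set ks. length (F i) = 3) \<Longrightarrow> length (concat (map F ks)) = 3 * length ks"
  by (induction ks) auto

lemma vec3_append: "x \<in> vec3 m \<Longrightarrow> y \<in> vec3 n \<Longrightarrow> x @ y \<in> vec3 (m + n)"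
  by (auto simp: vec3_def)

lemma vec3_concat: "(\<forall>i\<in>set ks. F i \<in> vec3 3) \<Longrightarrow> concat (map F ks) \<in> vec3 (3 * length ks)"
proof (induction ks)
  case Nil then show ?case by (simp add: vec3_def)
next
  case (Cons k ks)
  then have "F k @ concat (map F ks) \<in> vec3 (3 + 3 * length ks)" by (intro vec3_append) auto
  then show ?case by simp
qed

lemma phi_vec: "phi s \<in> vec3 3"
  by (simp add: phi_def Let_def vec3_def)
lemma rep3_vec: "rep3 (s mod 3) \<in> vec3 3"
  by (simp add: rep3_def vec3_def)

lemma Phi_alt: "a \<in> space \<alpha> \<beta> \<Longrightarrow> Phi a = fst a @ concat (map (\<lambda>i. phi (snd a ! i)) [0..<\<beta>])"
proof -
  assume a: "a \<in> space \<alpha> \<beta>"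
  have "map phi (snd a) = map (\<lambda>i. phi (snd a ! i)) [0..<\<beta>]"
    by (rule nth_equalityI) (simp_all add: space_len2[OF a])
  then show ?thesis unfolding Phi_def by simp
qed

lemma Phi_vec: "a \<in> space \<alpha> \<beta> \<Longrightarrow> Phi a \<in> vec3 (\<alpha> + 3 * \<beta>)"
  using vec3_append[OF space_fst vec3_concat[of "[0..<\<beta>]" "\<lambda>i. phi (snd a ! i)"]]
  by (simp add: Phi_alt phi_vec)

lemma Eg_vec: "Eg \<alpha> \<beta> h \<in> vec3 (\<alpha> + 3 * \<beta>)"
  unfolding Eg_def using vec3_append[OF zero_vec3 vec3_concat[of "[0..<\<beta>]" "\<lambda>i. rep3 (h i mod 3)"]]
  by (simp add: rep3_vec)

lemma add3_append: "length x1 = length x2 \<Longrightarrow> add3 (x1 @ y1) (x2 @ y2) = add3 x1 x2 @ add3 y1 y2"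
  by (simp add: add3_def)

lemma smul3_append: "smul3 c (x @ y) = smul3 c x @ smul3 c y"
  by (simp add: smul3_def)

lemma add3_Nil[simp]: "add3 [] [] = []" by (simp add: add3_def)
lemma smul3_Nil[simp]: "smul3 c [] = []" by (simp add: smul3_def)
lemma smul3_rep0[simp]: "smul3 c (replicate n 0) = replicate n 0"
  by (rule nth_equalityI) auto

lemma add3_concat: "(\<forall>i\<in>set ks. length (F i) = 3 \<and> length (G i) = 3) \<Longrightarrow>
   add3 (concat (map F ks)) (concat (map G ks)) = concat (map (\<lambda>i. add3 (F i) (G i)) ks)"
  by (induction ks) (auto simp: add3_append)

lemma smul3_concat: "smul3 c (concat (map F ks)) = concat (map (\<lambda>i. smul3 c (F i)) ks)"
  by (induction ks) (auto simp: smul3_append)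

lemma add3_rep3: "add3 (rep3 a) (rep3 b) = rep3 ((a + b) mod 3)"
  by (simp add: add3_def rep3_def)
lemma smul3_rep3: "smul3 c (rep3 a) = rep3 ((c*a) mod 3)"
  by (simp add: smul3_def rep3_def)

lemma add3_replicate0: "add3 (replicate n 0) (replicate n 0) = replicate n 0"
  by (simp add: add3_zero zero_vec3)

lemma Eg_add: "add3 (Eg \<alpha> \<beta> h) (Eg \<alpha> \<beta> g) = Eg \<alpha> \<beta> (\<lambda>i. h i + g i)"
  unfolding Eg_def
  by (simp add: add3_append add3_concat add3_replicate0 add3_rep3 mod_add_eq)

lemma Eg_smul: "smul3 c (Eg \<alpha> \<beta> h) = Eg \<alpha> \<beta> (\<lambda>i. c * h i)"
  unfolding Eg_def
  by (simp add: smul3_append smul3_concat smul3_rep3 mod_mult_right_eq smul3_0)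

lemma Eg_cong: "(\<And>i. i < \<beta> \<Longrightarrow> h i mod 3 = g i mod 3) \<Longrightarrow> Eg \<alpha> \<beta> h = Eg \<alpha> \<beta> g"
  unfolding Eg_def by (intro arg_cong2[where f="(@)"] refl arg_cong[where f=concat] map_cong) auto

lemma Eg_zero: "(\<And>i. i < \<beta> \<Longrightarrow> h i mod 3 = 0) \<Longrightarrow> Eg \<alpha> \<beta> h = replicate (\<alpha> + 3 * \<beta>) 0"
proof -
  assume h: "\<And>i. i < \<beta> \<Longrightarrow> h i mod 3 = 0"
  have "Eg \<alpha> \<beta> h = Eg \<alpha> \<beta> (\<lambda>i. 0)" using h by (intro Eg_cong) auto
  also have "\<dots> = replicate \<alpha> 0 @ replicate (3 * \<beta>) 0"
  proof -
    have "concat (map (\<lambda>i. [0,0,0::int]) ks) = replicate (3 * length ks) 0" for ks :: "nat list"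
      by (induction ks) (auto simp: numeral_3_eq_3)
    from this[of "[0..<\<beta>]"] show ?thesis unfolding Eg_def by (simp add: rep3_def)
  qed
  finally show ?thesis by (simp add: replicate_add)
qed

lemma phi_add_pt:
  assumes "s \<in> {0..8}" "t \<in> {0..8}"
  shows "add3 (phi s) (phi t) = add3 (phi ((s+t) mod 9)) (rep3 (Qf s t mod 3))"
proof -
  have "s \<in> {0,1,2,3,4,5,6,7,8}" "t \<in> {0,1,2,3,4,5,6,7,8}" using assms by auto
  then show ?thesis by (auto simp: phi_def Qf_def Let_def add3_def rep3_def)
qed

lemma PhiAdd:
  assumes a: "a \<in> space \<alpha> \<beta>" and b: "b \<in> space \<alpha> \<beta>"
  shows "add3 (Phi a) (Phi b) = add3 (Phi (cw_add a b)) (Eg \<alpha> \<beta> (\<lambda>i. Qf (snd a!i) (snd b!i)))"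
proof -
  have ab: "cw_add a b \<in> space \<alpha> \<beta>" using cw_add_space[OF a b] .
  have l: "length (fst a) = \<alpha>" "length (fst b) = \<alpha>" "length (fst (cw_add a b)) = \<alpha>"
    using a b ab space_len1 by blast+
  have f: "add3 (fst (cw_add a b)) (replicate \<alpha> 0) = add3 (fst a) (fst b)"
    using add3_zero[OF space_fst[OF ab]] by (simp add: fst_cw_add)
  have s: "add3 (phi (snd a ! i)) (phi (snd b ! i)) =
     add3 (phi (snd (cw_add a b) ! i)) (rep3 (Qf (snd a ! i) (snd b ! i) mod 3))" if "i < \<beta>" for i
    using phi_add_pt[of "snd a ! i" "snd b ! i"] space_nth2[OF a that] space_nth2[OF b that] that
      space_len2[OF a] space_len2[OF b] by simp
  have c: "concat (map (\<lambda>i. add3 (phi (snd a ! i)) (phi (snd b ! i))) [0..<\<beta>]) =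
        concat (map (\<lambda>i. add3 (phi (snd (cw_add a b) ! i)) (rep3 (Qf (snd a ! i) (snd b ! i) mod 3))) [0..<\<beta>])"
    by (intro arg_cong[where f=concat] map_cong) (auto simp: s)
  show ?thesis
    unfolding Phi_alt[OF a] Phi_alt[OF b] Phi_alt[OF ab] Eg_def
    using l f c by (simp add: add3_append add3_concat)
qed

lemma phi3: "phi ((3 * x) mod 9) = rep3 (x mod 3)"
proof -
  have "(3 * x) mod 9 = 3 * (x mod 3)" using mod_mult_mult1[of 3 x 3] by simp
  moreover have "x mod 3 \<in> {0,1,2}" using pos_mod_bound[of 3 x] pos_mod_sign[of 3 x] by auto
  ultimately show ?thesis by (auto simp: phi_def rep3_def Let_def)
qed

lemma fst3: "length x = \<alpha> \<Longrightarrow> length y = \<alpha> \<Longrightarrow> fst (cw_smul 3 (cw_mult (x, z) (y, w))) = replicate \<alpha> 0"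
  by (rule nth_equalityI) (simp_all add: fst_cw_smul)

lemma Phi_P2:
  assumes v: "v \<in> space \<alpha> \<beta>" and w: "w \<in> space \<alpha> \<beta>"
  shows "Phi (cw_smul 3 (cw_mult v w)) = Eg \<alpha> \<beta> (\<lambda>i. snd v!i * snd w!i)"
proof -
  have f: "fst (cw_smul 3 (cw_mult v w)) = replicate \<alpha> 0"
    using v w by (intro nth_equalityI) (simp_all add: fst_cw_smul space_len1)
  have sn: "map phi (snd (cw_smul 3 (cw_mult v w))) = map (\<lambda>i. rep3 ((snd v!i * snd w!i) mod 3)) [0..<\<beta>]"
  proof (rule nth_equalityI)
    show "length (map phi (snd (cw_smul 3 (cw_mult v w)))) = length (map (\<lambda>i. rep3 ((snd v!i * snd w!i) mod 3)) [0..<\<beta>])"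
      using v w by (simp add: space_len2)
    fix i assume "i < length (map phi (snd (cw_smul 3 (cw_mult v w))))"
    then have i: "i < \<beta>" using v w by (simp add: space_len2)
    have "snd (cw_smul 3 (cw_mult v w)) ! i = (3 * ((snd v!i * snd w!i) mod 9)) mod 9"
      using i v w by (simp add: space_len2)
    then show "map phi (snd (cw_smul 3 (cw_mult v w))) ! i = map (\<lambda>i. rep3 ((snd v!i * snd w!i) mod 3)) [0..<\<beta>] ! i"
      using i v w phi3[of "(snd v!i * snd w!i) mod 9"] by (simp add: space_len2 mod_mod_cancel)
  qed
  show ?thesis unfolding Phi_def Eg_def using f sn by simp
qed

lemma Phi_P3:
  assumes u: "u \<in> space \<alpha> \<beta>" and v: "v \<in> space \<alpha> \<beta>" and w: "w \<in> space \<alpha> \<beta>"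
  shows "Phi (cw_smul 3 (cw_mult u (cw_mult v w))) = Eg \<alpha> \<beta> (\<lambda>i. snd u!i * snd v!i * snd w!i)"
proof -
  have f: "fst (cw_smul 3 (cw_mult u (cw_mult v w))) = replicate \<alpha> 0"
    using u v w by (intro nth_equalityI) (simp_all add: fst_cw_smul space_len1)
  have sn: "map phi (snd (cw_smul 3 (cw_mult u (cw_mult v w)))) = map (\<lambda>i. rep3 ((snd u!i * snd v!i * snd w!i) mod 3)) [0..<\<beta>]"
  proof (rule nth_equalityI)
    show "length (map phi (snd (cw_smul 3 (cw_mult u (cw_mult v w))))) = length (map (\<lambda>i. rep3 ((snd u!i * snd v!i * snd w!i) mod 3)) [0..<\<beta>])"
      using u v w by (simp add: space_len2)
    fix i assume "i < length (map phi (snd (cw_smul 3 (cw_mult u (cw_mult v w)))))"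
    then have i: "i < \<beta>" using u v w by (simp add: space_len2)
    have "snd (cw_smul 3 (cw_mult u (cw_mult v w))) ! i = (3 * ((snd u!i * ((snd v!i * snd w!i) mod 9)) mod 9)) mod 9"
      using i u v w by (simp add: space_len2)
    moreover have "((snd u!i * ((snd v!i * snd w!i) mod 9)) mod 9) mod 3 = (snd u!i * snd v!i * snd w!i) mod 3"
    proof -
      have "((snd u!i * ((snd v!i * snd w!i) mod 9)) mod 9) mod 3 = (snd u!i * ((snd v!i * snd w!i) mod 9)) mod 3"
        by (simp add: mod_mod_cancel)
      also have "\<dots> = (snd u!i * (((snd v!i * snd w!i) mod 9) mod 3)) mod 3" by (simp only: mod_mult_right_eq)
      also have "\<dots> = (snd u!i * ((snd v!i * snd w!i) mod 3)) mod 3" by (simp add: mod_mod_cancel)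
      also have "\<dots> = (snd u!i * snd v!i * snd w!i) mod 3" by (simp only: mod_mult_right_eq mult.assoc)
      finally show ?thesis .
    qed
    ultimately show "map phi (snd (cw_smul 3 (cw_mult u (cw_mult v w)))) ! i = map (\<lambda>i. rep3 ((snd u!i * snd v!i * snd w!i) mod 3)) [0..<\<beta>] ! i"
      using i u v w phi3[of "(snd u!i * ((snd v!i * snd w!i) mod 9)) mod 9"] by (simp add: space_len2)
  qed
  show ?thesis unfolding Phi_def Eg_def using f sn by simp
qed

lemma Phi_zero: "Phi (zero_cw \<alpha> \<beta>) = replicate (\<alpha> + 3 * \<beta>) 0"
proof -
  have "concat (map phi (replicate \<beta> 0)) = replicate (3 * \<beta>) 0"
    by (induction \<beta>) (auto simp: phi_def numeral_3_eq_3)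
  then show ?thesis by (simp add: Phi_def replicate_add)
qed

lemma phi_decode: "s \<in> {0..8} \<Longrightarrow> s = 3 * (phi s ! 0) + ((phi s ! 1 - phi s ! 0) mod 3)"
proof -
  assume "s \<in> {0..8}"
  then have "s \<in> {0,1,2,3,4,5,6,7,8}" by auto
  then show ?thesis by (auto simp: phi_def Let_def)
qed

lemma concat_phi_inj: "length ys = length zs \<Longrightarrow> concat (map phi ys) = concat (map phi zs) \<Longrightarrow>
  map phi ys = map phi zs"
proof (induction ys arbitrary: zs)
  case Nil then show ?case by simp
next
  case (Cons y ys)
  then obtain z zs' where zs: "zs = z # zs'" by (cases zs) auto
  have "phi y @ concat (map phi ys) = phi z @ concat (map phi zs')" using Cons.prems zs by simp
  then have "phi y = phi z" "concat (map phi ys) = concat (map phi zs')"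
    by (simp_all add: append_eq_append_conv)
  then show ?case using Cons zs by simp
qed

lemma Phi_inj: "inj_on Phi (space \<alpha> \<beta>)"
proof (rule inj_onI)
  fix a b assume a: "a \<in> space \<alpha> \<beta>" and b: "b \<in> space \<alpha> \<beta>" and e: "Phi a = Phi b"
  have l: "length (fst a) = length (fst b)" using a b space_len1 by metis
  have f: "fst a = fst b" and c: "concat (map phi (snd a)) = concat (map phi (snd b))"
    using e l unfolding Phi_def by (simp_all add: append_eq_append_conv)
  have m: "map phi (snd a) = map phi (snd b)"
    using concat_phi_inj[OF _ c] a b space_len2 by metis
  have "snd a = snd b"
  proof (rule nth_equalityI)
    show "length (snd a) = length (snd b)" using a b space_len2 by metis
    fix i assume "i < length (snd a)"
    then have i: "i < \<beta>" using a space_len2 by metis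
    have p: "phi (snd a ! i) = phi (snd b ! i)"
      using arg_cong[OF m, of "\<lambda>l. l ! i"] i a b space_len2 by (simp)
    show "snd a ! i = snd b ! i"
      using phi_decode[of "snd a ! i"] phi_decode[of "snd b ! i"] p space_nth2[OF a i] space_nth2[OF b i] by simp
  qed
  then show "a = b" using f by (rule_tac cw_eqI) auto
qed


definition rr :: "int list \<times> int list \<Rightarrow> nat \<Rightarrow> int" where
  "rr a i = snd a ! i mod 3"

lemma rr_range: "0 \<le> rr a i \<and> rr a i \<le> 2"
  by (simp add: rr_def)

lemma rr_add: "a \<in> space \<alpha> \<beta> \<Longrightarrow> b \<in> space \<alpha> \<beta> \<Longrightarrow> i < \<beta> \<Longrightarrow> rr (cw_add a b) i = (rr a i + rr b i) mod 3"
proof -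
  assume a: "a \<in> space \<alpha> \<beta>" and b: "b \<in> space \<alpha> \<beta>" and i: "i < \<beta>"
  have "rr (cw_add a b) i = ((snd a ! i + snd b ! i) mod 9) mod 3"
    using a b i by (simp add: rr_def space_len2)
  also have "\<dots> = (snd a ! i + snd b ! i) mod 3" by (simp add: mod_mod_cancel)
  also have "\<dots> = (rr a i + rr b i) mod 3" unfolding rr_def by (simp only: mod_add_eq)
  finally show ?thesis .
qed

lemma Qf_mod: "Qf s t = Qf (s mod 3) (t mod 3)"
proof -
  have "(s*t + s*s*t + s*t*t) mod 3 = ((s mod 3)*(t mod 3) + (s mod 3)*(s mod 3)*(t mod 3) + (s mod 3)*(t mod 3)*(t mod 3)) mod 3"
    by (intro mod_add_cong mod_mult_cong) simp_all
  then show ?thesis by (simp add: Qf_def)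
qed

lemma Qf_rr: "Qf (snd a ! i) (snd b ! i) = Qf (rr a i) (rr b i)"
  using Qf_mod by (simp add: rr_def)

lemma in3: "0 \<le> (a::int) \<Longrightarrow> a \<le> 2 \<Longrightarrow> a \<in> {0,1,2}"
  by auto

lemma pt_pair: "a \<in> {0,1,2} \<Longrightarrow> b \<in> {0,1,2} \<Longrightarrow>
  (Qf a ((b+b) mod 3) + Qf ((a+a) mod 3) b) mod 3 = (a*b) mod 3"
  by (auto simp: Qf_def)

lemma pt_sq: "a \<in> {0,1,2} \<Longrightarrow> b \<in> {0,1,2} \<Longrightarrow>
  (Qf a ((b+b) mod 3) + (2 * Qf a b + 2 * (a*b))) mod 3 = (a*a*b) mod 3"
  by (auto simp: Qf_def)

lemma pt_trip: "(a::int) \<in> {0,1,2} \<Longrightarrow> b \<in> {0,1,2} \<Longrightarrow> c \<in> {0,1,2} \<Longrightarrow>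
  (2 * (((a+b) mod 3) * ((a+b) mod 3) * c) + (a*a*c + b*b*c)) mod 3 = (a*b*c) mod 3"
  by (auto simp: Qf_def)

lemma pt_cube: "a \<in> {0,1,2} \<Longrightarrow> (a*a*a) mod 3 = a mod (3::int)"
  by auto

lemma Eg_rr2: "v \<in> space \<alpha> \<beta> \<Longrightarrow> w \<in> space \<alpha> \<beta> \<Longrightarrow>
  Eg \<alpha> \<beta> (\<lambda>i. snd v!i * snd w!i) = Eg \<alpha> \<beta> (\<lambda>i. rr v i * rr w i)"
  by (rule Eg_cong) (unfold rr_def, intro mod_mult_cong, simp_all)

lemma Eg_rr3: "Eg \<alpha> \<beta> (\<lambda>i. snd u!i * snd v!i * snd w!i) = Eg \<alpha> \<beta> (\<lambda>i. rr u i * rr v i * rr w i)"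
proof (rule Eg_cong)
  fix i
  show "(snd u!i * snd v!i * snd w!i) mod 3 = (rr u i * rr v i * rr w i) mod 3"
    unfolding rr_def by (intro mod_mult_cong) simp_all
qed

context
  fixes \<alpha> \<beta> :: nat and C :: "(int list \<times> int list) set"
  assumes C: "additive_code \<alpha> \<beta> C"
begin

abbreviation "N \<equiv> \<alpha> + 3 * \<beta>"
abbreviation "SS \<equiv> span3 N (Phi ` C)"

lemma PhiC_vec: "Phi ` C \<subseteq> vec3 N"
  using C Phi_vec additive_space by blast

lemma SS_closed: "closed3 N SS"
  using span_closed[OF PhiC_vec] .

lemma Phi_in_SS: "a \<in> C \<Longrightarrow> Phi a \<in> SS"
  using span_in[OF PhiC_vec] by blast

lemma EgQ_in: assumes a: "a \<in> C" and b: "b \<in> C"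
  shows "Eg \<alpha> \<beta> (\<lambda>i. Qf (rr a i) (rr b i)) \<in> SS"
proof -
  have as: "a \<in> space \<alpha> \<beta>" "b \<in> space \<alpha> \<beta>" using a b C additive_space by blast+
  let ?E = "Eg \<alpha> \<beta> (\<lambda>i. Qf (snd a!i) (snd b!i))"
  have "?E = add3 (add3 (Phi a) (Phi b)) (smul3 2 (Phi (cw_add a b)))"
    by (rule add3_solve[OF _ Eg_vec PhiAdd[OF as]]) (simp add: vec3_len[OF Phi_vec[OF cw_add_space[OF as]]])
  moreover have "add3 (add3 (Phi a) (Phi b)) (smul3 2 (Phi (cw_add a b))) \<in> SS"
    using closed3_add[OF SS_closed closed3_add[OF SS_closed Phi_in_SS[OF a] Phi_in_SS[OF b]]
        closed3_smul[OF SS_closed Phi_in_SS[OF additive_add[OF C a b]]]] .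
  moreover have "?E = Eg \<alpha> \<beta> (\<lambda>i. Qf (rr a i) (rr b i))" using Qf_rr by simp
  ultimately show ?thesis by simp
qed

lemma pair_in: assumes v: "v \<in> C" and w: "w \<in> C"
  shows "Eg \<alpha> \<beta> (\<lambda>i. rr v i * rr w i) \<in> SS"
proof -
  have vs: "v \<in> space \<alpha> \<beta>" "w \<in> space \<alpha> \<beta>" using v w C additive_space by blast+
  have w2: "cw_add w w \<in> C" "cw_add v v \<in> C" using v w C additive_add by blast+
  have "add3 (Eg \<alpha> \<beta> (\<lambda>i. Qf (rr v i) (rr (cw_add w w) i))) (Eg \<alpha> \<beta> (\<lambda>i. Qf (rr (cw_add v v) i) (rr w i))) \<in> SS"
    using EgQ_in[OF v w2(1)] EgQ_in[OF w2(2) w] SS_closed closed3_add by blast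
  moreover have "add3 (Eg \<alpha> \<beta> (\<lambda>i. Qf (rr v i) (rr (cw_add w w) i))) (Eg \<alpha> \<beta> (\<lambda>i. Qf (rr (cw_add v v) i) (rr w i)))
     = Eg \<alpha> \<beta> (\<lambda>i. rr v i * rr w i)"
    unfolding Eg_add
  proof (rule Eg_cong)
    fix i assume i: "i < \<beta>"
    show "(Qf (rr v i) (rr (cw_add w w) i) + Qf (rr (cw_add v v) i) (rr w i)) mod 3 = (rr v i * rr w i) mod 3"
      using pt_pair[OF in3 in3, of "rr v i" "rr w i"] rr_range rr_add[OF vs(1) vs(1) i] rr_add[OF vs(2) vs(2) i]
      by simp
  qed
  ultimately show ?thesis by simp
qed

lemma sq_in: assumes v: "v \<in> C" and w: "w \<in> C"
  shows "Eg \<alpha> \<beta> (\<lambda>i. rr v i * rr v i * rr w i) \<in> SS"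
proof -
  have vs: "v \<in> space \<alpha> \<beta>" "w \<in> space \<alpha> \<beta>" using v w C additive_space by blast+
  have w2: "cw_add w w \<in> C" using v w C additive_add by blast+
  let ?A = "Eg \<alpha> \<beta> (\<lambda>i. Qf (rr v i) (rr (cw_add w w) i))"
  let ?B = "Eg \<alpha> \<beta> (\<lambda>i. Qf (rr v i) (rr w i))"
  let ?P = "Eg \<alpha> \<beta> (\<lambda>i. rr v i * rr w i)"
  have "add3 ?A (add3 (smul3 2 ?B) (smul3 2 ?P)) \<in> SS"
    using closed3_add[OF SS_closed EgQ_in[OF v w2] closed3_add[OF SS_closed closed3_smul[OF SS_closed EgQ_in[OF v w]]
       closed3_smul[OF SS_closed pair_in[OF v w]]]] .
  moreover have "add3 ?A (add3 (smul3 2 ?B) (smul3 2 ?P)) = Eg \<alpha> \<beta> (\<lambda>i. rr v i * rr v i * rr w i)"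
    unfolding Eg_add Eg_smul
  proof (rule Eg_cong)
    fix i assume i: "i < \<beta>"
    show "(Qf (rr v i) (rr (cw_add w w) i) + (2 * Qf (rr v i) (rr w i) + 2 * (rr v i * rr w i))) mod 3 = (rr v i * rr v i * rr w i) mod 3"
      using pt_sq[OF in3 in3, of "rr v i" "rr w i"] rr_range rr_add[OF vs(2) vs(2) i]
      by simp
  qed
  ultimately show ?thesis by simp
qed

lemma trip_in: assumes x: "x \<in> C" and y: "y \<in> C" and z: "z \<in> C"
  shows "Eg \<alpha> \<beta> (\<lambda>i. rr x i * rr y i * rr z i) \<in> SS"
proof -
  have xs: "x \<in> space \<alpha> \<beta>" "y \<in> space \<alpha> \<beta>" using x y C additive_space by blast+
  have a: "cw_add x y \<in> C" using x y C additive_add by blast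
  let ?A = "Eg \<alpha> \<beta> (\<lambda>i. rr (cw_add x y) i * rr (cw_add x y) i * rr z i)"
  let ?B = "Eg \<alpha> \<beta> (\<lambda>i. rr x i * rr x i * rr z i)"
  let ?D = "Eg \<alpha> \<beta> (\<lambda>i. rr y i * rr y i * rr z i)"
  have "add3 (smul3 2 ?A) (add3 ?B ?D) \<in> SS"
    using closed3_add[OF SS_closed closed3_smul[OF SS_closed sq_in[OF a z]] closed3_add[OF SS_closed sq_in[OF x z] sq_in[OF y z]]] .
  moreover have "add3 (smul3 2 ?A) (add3 ?B ?D) = Eg \<alpha> \<beta> (\<lambda>i. rr x i * rr y i * rr z i)"
    unfolding Eg_add Eg_smul
  proof (rule Eg_cong)
    fix i assume i: "i < \<beta>"
    show "(2 * (rr (cw_add x y) i * rr (cw_add x y) i * rr z i) + (rr x i * rr x i * rr z i + rr y i * rr y i * rr z i)) mod 3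
        = (rr x i * rr y i * rr z i) mod 3"
      using pt_trip[OF in3 in3 in3, of "rr x i" "rr y i" "rr z i"] rr_range rr_add[OF xs(1) xs(2) i]
      by simp
  qed
  ultimately show ?thesis by simp
qed

end


lemma cw_mult_space: "a \<in> space \<alpha> \<beta> \<Longrightarrow> b \<in> space \<alpha> \<beta> \<Longrightarrow> cw_mult a b \<in> space \<alpha> \<beta>"
  by (simp add: space_iff)

lemma gm_sub: "is_gen_matrix \<alpha> \<beta> C us vs \<Longrightarrow> set us \<subseteq> C \<and> set vs \<subseteq> C"
  by (simp add: is_gen_matrix_def)

lemma gm_surj: assumes "is_gen_matrix \<alpha> \<beta> C us vs" "c \<in> C"
  shows "\<exists>ls ns. length ls = length us \<and> set ls \<subseteq> {0..2} \<and> length ns = length vs \<and> set ns \<subseteq> {0..8} \<and>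
     c = gen_comb \<alpha> \<beta> us vs ls ns"
proof -
  have "(\<lambda>(ls, ns). gen_comb \<alpha> \<beta> us vs ls ns) `
       ({ls. length ls = length us \<and> set ls \<subseteq> {0..2}} \<times> {ns. length ns = length vs \<and> set ns \<subseteq> {0..8}}) = C"
    using assms(1) unfolding is_gen_matrix_def using bij_betw_imp_surj_on by blast
  then show ?thesis using assms(2) by force
qed

lemma smul_step:
  assumes Xs: "X \<subseteq> space \<alpha> \<beta>" and w: "w \<in> space \<alpha> \<beta>" and st: "\<forall>b\<in>X. cw_add w b \<in> X"
  shows "b \<in> X \<Longrightarrow> cw_add (cw_smul (int k) w) b \<in> X"
proof (induction k arbitrary: b)
  case 0
  have "b \<in> space \<alpha> \<beta>" using 0 Xs by blast
  then show ?case using 0 cw_smul_0[OF w] cw_add_zero_left by simp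
next
  case (Suc k)
  have b: "b \<in> space \<alpha> \<beta>" using Suc.prems Xs by blast
  have "cw_smul (int (Suc k)) w = cw_add w (cw_smul (int k) w)" using cw_smul_Suc[OF w, of "int k"] by (simp add: add.commute)
  then have "cw_add (cw_smul (int (Suc k)) w) b = cw_add w (cw_add (cw_smul (int k) w) b)"
    using cw_add_assoc[OF w cw_smul_space[OF w] b] by simp
  then show ?case using Suc st by simp
qed

lemma foldr_step: "z \<in> X \<Longrightarrow> \<forall>t\<in>set ts. \<forall>b\<in>X. cw_add t b \<in> X \<Longrightarrow> foldr cw_add ts z \<in> X"
  by (induction ts) auto

lemma gen_ind:
  assumes gm: "is_gen_matrix \<alpha> \<beta> C us vs" and sp: "set us \<subseteq> space \<alpha> \<beta>" "set vs \<subseteq> space \<alpha> \<beta>"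
    and Xs: "X \<subseteq> space \<alpha> \<beta>" and z: "zero_cw \<alpha> \<beta> \<in> X"
    and su: "\<forall>u\<in>set us. \<forall>b\<in>X. cw_add u b \<in> X" and sv: "\<forall>v\<in>set vs. \<forall>b\<in>X. cw_add v b \<in> X"
  shows "C \<subseteq> X"
proof
  fix c assume "c \<in> C"
  then obtain ls ns where ln: "length ls = length us" "set ls \<subseteq> {0..2}" "length ns = length vs" "set ns \<subseteq> {0..8}"
    and c: "c = gen_comb \<alpha> \<beta> us vs ls ns" using gm_surj[OF gm] by blast
  have gen: "\<forall>b\<in>X. cw_add (cw_smul l w) b \<in> X" if "w \<in> space \<alpha> \<beta>" "\<forall>b\<in>X. cw_add w b \<in> X" "0 \<le> l" for w l
  proof -
    have "l = int (nat l)" using that(3) by simp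
    then show ?thesis using smul_step[OF Xs that(1) that(2)] by metis
  qed
  have t1: "\<forall>b\<in>X. cw_add t b \<in> X" if "t \<in> set (map2 cw_smul ls us)" for t
  proof -
    have "t \<in> (\<lambda>(x, y). cw_smul x y) ` set (zip ls us)" using that by simp
    then obtain p where p: "p \<in> set (zip ls us)" "t = (\<lambda>(x, y). cw_smul x y) p" by (rule imageE)
    obtain l u where "p = (l, u)" by (cases p)
    then have "(l, u) \<in> set (zip ls us)" "t = cw_smul l u" using p by auto
    then have "l \<in> set ls" "u \<in> set us" "t = cw_smul l u" by (auto dest: set_zip_leftD set_zip_rightD)
    then have "u \<in> space \<alpha> \<beta>" "\<forall>b\<in>X. cw_add u b \<in> X" "0 \<le> l" using sp su ln(2) by auto
    then show ?thesis using gen[of u l] \<open>t = cw_smul l u\<close> by simp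
  qed
  have t2: "\<forall>b\<in>X. cw_add t b \<in> X" if "t \<in> set (map2 cw_smul ns vs)" for t
  proof -
    have "t \<in> (\<lambda>(x, y). cw_smul x y) ` set (zip ns vs)" using that by simp
    then obtain p where p: "p \<in> set (zip ns vs)" "t = (\<lambda>(x, y). cw_smul x y) p" by (rule imageE)
    obtain l u where "p = (l, u)" by (cases p)
    then have "(l, u) \<in> set (zip ns vs)" "t = cw_smul l u" using p by auto
    then have "l \<in> set ns" "u \<in> set vs" "t = cw_smul l u" by (auto dest: set_zip_leftD set_zip_rightD)
    then have "u \<in> space \<alpha> \<beta>" "\<forall>b\<in>X. cw_add u b \<in> X" "0 \<le> l" using sp sv ln(4) by auto
    then show ?thesis using gen[of u l] \<open>t = cw_smul l u\<close> by simp
  qed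
  have "\<forall>t\<in>set (map2 cw_smul ls us @ map2 cw_smul ns vs). \<forall>b\<in>X. cw_add t b \<in> X"
  proof
    fix t assume "t \<in> set (map2 cw_smul ls us @ map2 cw_smul ns vs)"
    then have "t \<in> set (map2 cw_smul ls us) \<or> t \<in> set (map2 cw_smul ns vs)" by (simp only: set_append Un_iff)
    then show "\<forall>b\<in>X. cw_add t b \<in> X" using t1 t2 by blast
  qed
  then show "c \<in> X" unfolding c gen_comb_def by (rule foldr_step[OF z])
qed

lemma order3_rr: assumes u: "u \<in> space \<alpha> \<beta>" "order3 \<alpha> \<beta> u" and i: "i < \<beta>" shows "rr u i = 0"
proof -
  have "cw_smul 3 u = zero_cw \<alpha> \<beta>" using u by (simp add: order3_def)
  then have "snd (cw_smul 3 u) ! i = 0" using i by simp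
  then have "(3 * snd u ! i) mod 9 = 0" using i u space_len2 by simp
  then have "3 * (snd u ! i mod 3) = 0" using mod_mult_mult1[of 3 "snd u ! i" 3] by simp
  then show ?thesis by (simp add: rr_def)
qed

lemma pt_lin: "(x * ((c + d) mod 3)) mod 3 = (x*c + x*d) mod (3::int)"
  by (simp add: mod_mult_right_eq distrib_left)

lemma pt_quad: "(a::int) \<in> {0,1,2} \<Longrightarrow> c \<in> {0,1,2} \<Longrightarrow> d \<in> {0,1,2} \<Longrightarrow>
  (a * ((c+d) mod 3) * ((c+d) mod 3)) mod 3 = (a*c*c + (2*(a*c*d) + a*d*d)) mod 3"
  by auto

lemma pt_Q: "Qf a c mod 3 = (a*c + (a*a*c + a*c*c)) mod 3"
  by (simp add: Qf_def add.assoc)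


definition P2 :: "(int list \<times> int list) list \<Rightarrow> (int list \<times> int list) set" where
  "P2 vs = {cw_smul 3 (cw_mult (vs ! k) (vs ! l)) | k l. l \<le> k \<and> k < length vs}"
definition P3 :: "(int list \<times> int list) list \<Rightarrow> (int list \<times> int list) set" where
  "P3 vs = {cw_smul 3 (cw_mult (vs ! x) (cw_mult (vs ! y) (vs ! z))) | x y z. x \<le> y \<and> y \<le> z \<and> z < length vs}"
definition Gset where "Gset us vs = set us \<union> set vs \<union> P2 vs \<union> P3 vs"

context
  fixes \<alpha> \<beta> :: nat and C :: "(int list \<times> int list) set" and us vs
  assumes C: "additive_code \<alpha> \<beta> C" and gm: "is_gen_matrix \<alpha> \<beta> C us vs"
begin

lemma usC: "set us \<subseteq> C" and vsC: "set vs \<subseteq> C" using gm_sub[OF gm] by auto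
lemma us_sp: "set us \<subseteq> space \<alpha> \<beta>" using usC C additive_space by blast
lemma vs_sp: "set vs \<subseteq> space \<alpha> \<beta>" using vsC C additive_space by blast
lemma vsj_C: "j < length vs \<Longrightarrow> vs ! j \<in> C" using vsC by auto
lemma vsj_sp: "j < length vs \<Longrightarrow> vs ! j \<in> space \<alpha> \<beta>" using vs_sp by auto

lemma Gset_sp: "Gset us vs \<subseteq> space \<alpha> \<beta>"
  unfolding Gset_def P2_def P3_def using us_sp vs_sp vsj_sp
  by (auto intro!: cw_smul_space cw_mult_space)

lemma PG_vec: "Phi ` Gset us vs \<subseteq> vec3 (\<alpha> + 3 * \<beta>)"
  using Gset_sp Phi_vec by blast

abbreviation "SG \<equiv> span3 (\<alpha> + 3 * \<beta>) (Phi ` Gset us vs)"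

lemma SG_closed: "closed3 (\<alpha> + 3 * \<beta>) SG" using span_closed[OF PG_vec] .

lemma SG_in: "x \<in> Gset us vs \<Longrightarrow> Phi x \<in> SG"
  using span_in[OF PG_vec] by blast

lemma sup_part: "SG \<subseteq> span3 (\<alpha> + 3 * \<beta>) (Phi ` C)"
proof (rule span_least[OF _ SS_closed[OF C]])
  show "Phi ` Gset us vs \<subseteq> span3 (\<alpha> + 3 * \<beta>) (Phi ` C)"
  proof
    fix y assume "y \<in> Phi ` Gset us vs"
    then obtain x where x: "x \<in> Gset us vs" "y = Phi x" by blast
    then consider "x \<in> set us \<union> set vs" | "x \<in> P2 vs" | "x \<in> P3 vs" unfolding Gset_def by blast
    then show "y \<in> span3 (\<alpha> + 3 * \<beta>) (Phi ` C)"
    proof cases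
      case 1 then show ?thesis using x usC vsC Phi_in_SS[OF C] by blast
    next
      case 2
      then obtain k l where kl: "x = cw_smul 3 (cw_mult (vs ! k) (vs ! l))" "l \<le> k" "k < length vs"
        unfolding P2_def by blast
      have "Phi x = Eg \<alpha> \<beta> (\<lambda>i. rr (vs!k) i * rr (vs!l) i)"
        using kl Phi_P2[OF vsj_sp vsj_sp] Eg_rr2[OF vsj_sp vsj_sp] by simp
      then show ?thesis using x pair_in[OF C vsj_C vsj_C] kl by simp
    next
      case 3
      then obtain a b c where abc: "x = cw_smul 3 (cw_mult (vs ! a) (cw_mult (vs ! b) (vs ! c)))" "a \<le> b" "b \<le> c" "c < length vs"
        unfolding P3_def by blast
      have "Phi x = Eg \<alpha> \<beta> (\<lambda>i. rr (vs!a) i * rr (vs!b) i * rr (vs!c) i)"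
        using abc Phi_P3[OF vsj_sp vsj_sp vsj_sp] Eg_rr3 by simp
      then show ?thesis using x trip_in[OF C vsj_C vsj_C vsj_C] abc by simp
    qed
  qed
qed

lemma pairG: assumes j: "j < length vs" and k: "k < length vs"
  shows "Eg \<alpha> \<beta> (\<lambda>i. rr (vs!j) i * rr (vs!k) i) \<in> SG"
proof -
  have gen: "Eg \<alpha> \<beta> (\<lambda>i. rr (vs!a) i * rr (vs!b) i) \<in> SG" if "b \<le> a" "a < length vs" for a b
  proof -
    have "cw_smul 3 (cw_mult (vs ! a) (vs ! b)) \<in> Gset us vs"
      unfolding Gset_def P2_def using that by blast
    then have "Phi (cw_smul 3 (cw_mult (vs ! a) (vs ! b))) \<in> SG" by (rule SG_in)
    moreover have "Phi (cw_smul 3 (cw_mult (vs ! a) (vs ! b))) = Eg \<alpha> \<beta> (\<lambda>i. rr (vs!a) i * rr (vs!b) i)"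
      using that Phi_P2[OF vsj_sp vsj_sp] Eg_rr2[OF vsj_sp vsj_sp] by simp
    ultimately show ?thesis by simp
  qed
  show ?thesis
  proof (cases "k \<le> j")
    case True then show ?thesis using gen j by blast
  next
    case False
    then have "Eg \<alpha> \<beta> (\<lambda>i. rr (vs!k) i * rr (vs!j) i) \<in> SG" using gen k by simp
    then show ?thesis by (simp add: mult.commute)
  qed
qed

lemma tripG: assumes x: "x < length vs" and y: "y < length vs" and z: "z < length vs"
  shows "Eg \<alpha> \<beta> (\<lambda>i. rr (vs!x) i * rr (vs!y) i * rr (vs!z) i) \<in> SG"
proof -
  have gen: "Eg \<alpha> \<beta> (\<lambda>i. rr (vs!a) i * rr (vs!b) i * rr (vs!c) i) \<in> SG" if "a \<le> b" "b \<le> c" "c < length vs" for a b c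
  proof -
    have "cw_smul 3 (cw_mult (vs ! a) (cw_mult (vs ! b) (vs ! c))) \<in> Gset us vs"
      unfolding Gset_def P3_def using that by blast
    then have "Phi (cw_smul 3 (cw_mult (vs ! a) (cw_mult (vs ! b) (vs ! c)))) \<in> SG" by (rule SG_in)
    moreover have "Phi (cw_smul 3 (cw_mult (vs ! a) (cw_mult (vs ! b) (vs ! c)))) = Eg \<alpha> \<beta> (\<lambda>i. rr (vs!a) i * rr (vs!b) i * rr (vs!c) i)"
      using that Phi_P3[OF vsj_sp vsj_sp vsj_sp] Eg_rr3 by simp
    ultimately show ?thesis by simp
  qed
  consider "x \<le> y" "y \<le> z" | "x \<le> z" "z \<le> y" | "y \<le> x" "x \<le> z" | "y \<le> z" "z \<le> x" | "z \<le> x" "x \<le> y" | "z \<le> y" "y \<le> x"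
    by linarith
  then show ?thesis
  proof cases
    case 1 then show ?thesis using gen z by blast
  next
    case 2 then have "Eg \<alpha> \<beta> (\<lambda>i. rr (vs!x) i * rr (vs!z) i * rr (vs!y) i) \<in> SG" using gen y by blast
    then show ?thesis by (simp add: ac_simps)
  next
    case 3 then have "Eg \<alpha> \<beta> (\<lambda>i. rr (vs!y) i * rr (vs!x) i * rr (vs!z) i) \<in> SG" using gen z by blast
    then show ?thesis by (simp add: ac_simps)
  next
    case 4 then have "Eg \<alpha> \<beta> (\<lambda>i. rr (vs!y) i * rr (vs!z) i * rr (vs!x) i) \<in> SG" using gen x by blast
    then show ?thesis by (simp add: ac_simps)
  next
    case 5 then have "Eg \<alpha> \<beta> (\<lambda>i. rr (vs!z) i * rr (vs!x) i * rr (vs!y) i) \<in> SG" using gen y by blast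
    then show ?thesis by (simp add: ac_simps)
  next
    case 6 then have "Eg \<alpha> \<beta> (\<lambda>i. rr (vs!z) i * rr (vs!y) i * rr (vs!x) i) \<in> SG" using gen x by blast
    then show ?thesis by (simp add: ac_simps)
  qed
qed

lemma rr_zero: "i < \<beta> \<Longrightarrow> rr (zero_cw \<alpha> \<beta>) i = 0"
  by (simp add: rr_def)

lemma sub_part: "Phi ` C \<subseteq> SG"
proof -
  let ?N = "\<alpha> + 3 * \<beta>"
  let ?I = "\<lambda>b. Phi b \<in> SG \<and> (\<forall>j<length vs. Eg \<alpha> \<beta> (\<lambda>i. rr (vs!j) i * rr b i) \<in> SG) \<and>
     (\<forall>j<length vs. \<forall>k<length vs. Eg \<alpha> \<beta> (\<lambda>i. rr (vs!j) i * rr (vs!k) i * rr b i) \<in> SG) \<and>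
     (\<forall>j<length vs. Eg \<alpha> \<beta> (\<lambda>i. rr (vs!j) i * rr b i * rr b i) \<in> SG)"
  define X where "X = {b \<in> space \<alpha> \<beta>. ?I b}"
  have cl: "closed3 ?N SG" by (rule SG_closed)
  have z0: "replicate ?N 0 \<in> SG" by (rule closed3_zero[OF cl])
  have zero: "zero_cw \<alpha> \<beta> \<in> X"
  proof -
    have e1: "Eg \<alpha> \<beta> (\<lambda>i. rr (vs!j) i * rr (zero_cw \<alpha> \<beta>) i) = replicate ?N 0" for j
      by (rule Eg_zero) (simp add: rr_zero)
    have e2: "Eg \<alpha> \<beta> (\<lambda>i. rr (vs!j) i * rr (vs!k) i * rr (zero_cw \<alpha> \<beta>) i) = replicate ?N 0" for j k
      by (rule Eg_zero) (simp add: rr_zero)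
    have e3: "Eg \<alpha> \<beta> (\<lambda>i. rr (vs!j) i * rr (zero_cw \<alpha> \<beta>) i * rr (zero_cw \<alpha> \<beta>) i) = replicate ?N 0" for j
      by (rule Eg_zero) (simp add: rr_zero)
    show ?thesis unfolding X_def using zero_space Phi_zero e1 e2 e3 z0 by simp
  qed
  have XS: "X \<subseteq> space \<alpha> \<beta>" unfolding X_def by blast
  have stepu: "cw_add u b \<in> X" if u: "u \<in> set us" and b: "b \<in> X" for u b
  proof -
    have us: "u \<in> space \<alpha> \<beta>" using u us_sp by blast
    have o3: "order3 \<alpha> \<beta> u" using gm u by (simp add: is_gen_matrix_def)
    have bs: "b \<in> space \<alpha> \<beta>" and Ib: "?I b" using b unfolding X_def by auto
    let ?ub = "cw_add u b"
    have ubs: "?ub \<in> space \<alpha> \<beta>" using cw_add_space[OF us bs] .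
    have rru: "rr ?ub i = rr b i" if "i < \<beta>" for i
      using rr_add[OF us bs that] order3_rr[OF us o3 that] rr_range[of b i] by simp
    have EQ: "Eg \<alpha> \<beta> (\<lambda>i. Qf (snd u!i) (snd b!i)) = replicate ?N 0"
      by (rule Eg_zero) (simp only: Qf_rr, simp add: order3_rr[OF us o3] Qf_def)
    have "add3 (Phi u) (Phi b) = add3 (Phi ?ub) (replicate ?N 0)" using PhiAdd[OF us bs] EQ by simp
    also have "\<dots> = Phi ?ub" using add3_zero[OF Phi_vec[OF ubs]] .
    finally have "Phi ?ub \<in> SG"
      using closed3_add[OF cl SG_in[of u] conjunct1[OF Ib]] u unfolding Gset_def by auto
    moreover have "Eg \<alpha> \<beta> (\<lambda>i. rr (vs!j) i * rr ?ub i) = Eg \<alpha> \<beta> (\<lambda>i. rr (vs!j) i * rr b i)" for j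
      by (rule Eg_cong) (simp add: rru)
    moreover have "Eg \<alpha> \<beta> (\<lambda>i. rr (vs!j) i * rr (vs!k) i * rr ?ub i) = Eg \<alpha> \<beta> (\<lambda>i. rr (vs!j) i * rr (vs!k) i * rr b i)" for j k
      by (rule Eg_cong) (simp add: rru)
    moreover have "Eg \<alpha> \<beta> (\<lambda>i. rr (vs!j) i * rr ?ub i * rr ?ub i) = Eg \<alpha> \<beta> (\<lambda>i. rr (vs!j) i * rr b i * rr b i)" for j
      by (rule Eg_cong) (simp add: rru)
    ultimately show ?thesis using Ib ubs unfolding X_def by simp
  qed
  have stepv: "cw_add (vs!m) b \<in> X" if m: "m < length vs" and b: "b \<in> X" for m b
  proof -
    let ?v = "vs!m"
    have vsp: "?v \<in> space \<alpha> \<beta>" using vsj_sp[OF m] .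
    have bs: "b \<in> space \<alpha> \<beta>" and Ib: "?I b" using b unfolding X_def by auto
    let ?vb = "cw_add ?v b"
    have vbs: "?vb \<in> space \<alpha> \<beta>" using cw_add_space[OF vsp bs] .
    have rrv: "rr ?vb i = (rr ?v i + rr b i) mod 3" if "i < \<beta>" for i
      using rr_add[OF vsp bs that] .
    let ?EQ = "Eg \<alpha> \<beta> (\<lambda>i. Qf (snd ?v!i) (snd b!i))"
    have e: "add3 (Phi ?v) (Phi b) = add3 ?EQ (Phi ?vb)" using PhiAdd[OF vsp bs] add3_comm by metis
    have phivb: "Phi ?vb = add3 (add3 (Phi ?v) (Phi b)) (smul3 2 ?EQ)"
      by (rule add3_solve[OF _ Phi_vec[OF vbs] e]) (simp add: vec3_len[OF Eg_vec])
    have EQe: "?EQ = add3 (Eg \<alpha> \<beta> (\<lambda>i. rr ?v i * rr b i))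
                 (add3 (Eg \<alpha> \<beta> (\<lambda>i. rr ?v i * rr ?v i * rr b i)) (Eg \<alpha> \<beta> (\<lambda>i. rr ?v i * rr b i * rr b i)))"
      unfolding Eg_add by (rule Eg_cong) (simp add: Qf_rr pt_Q)
    have EQin: "?EQ \<in> SG" unfolding EQe using Ib m
      by (intro closed3_add[OF cl]) blast+
    have vin: "Phi ?v \<in> SG" using SG_in[of ?v] m unfolding Gset_def by auto
    have P: "Phi ?vb \<in> SG" unfolding phivb using vin conjunct1[OF Ib] EQin
      by (intro closed3_add[OF cl] closed3_smul[OF cl])
    have I1: "Eg \<alpha> \<beta> (\<lambda>i. rr (vs!j) i * rr ?vb i) \<in> SG" if j: "j < length vs" for j
    proof -
      have "Eg \<alpha> \<beta> (\<lambda>i. rr (vs!j) i * rr ?vb i) = add3 (Eg \<alpha> \<beta> (\<lambda>i. rr (vs!j) i * rr ?v i)) (Eg \<alpha> \<beta> (\<lambda>i. rr (vs!j) i * rr b i))"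
        unfolding Eg_add by (rule Eg_cong) (simp add: rrv pt_lin)
      then show ?thesis using closed3_add[OF cl pairG[OF j m]] Ib j by simp
    qed
    have I2: "Eg \<alpha> \<beta> (\<lambda>i. rr (vs!j) i * rr (vs!k) i * rr ?vb i) \<in> SG" if j: "j < length vs" and k: "k < length vs" for j k
    proof -
      have "Eg \<alpha> \<beta> (\<lambda>i. rr (vs!j) i * rr (vs!k) i * rr ?vb i) =
         add3 (Eg \<alpha> \<beta> (\<lambda>i. rr (vs!j) i * rr (vs!k) i * rr ?v i)) (Eg \<alpha> \<beta> (\<lambda>i. rr (vs!j) i * rr (vs!k) i * rr b i))"
        unfolding Eg_add by (rule Eg_cong) (simp add: rrv pt_lin)
      then show ?thesis using closed3_add[OF cl tripG[OF j k m]] Ib j k by simp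
    qed
    have I3: "Eg \<alpha> \<beta> (\<lambda>i. rr (vs!j) i * rr ?vb i * rr ?vb i) \<in> SG" if j: "j < length vs" for j
    proof -
      have "Eg \<alpha> \<beta> (\<lambda>i. rr (vs!j) i * rr ?vb i * rr ?vb i) =
         add3 (Eg \<alpha> \<beta> (\<lambda>i. rr (vs!j) i * rr ?v i * rr ?v i))
           (add3 (smul3 2 (Eg \<alpha> \<beta> (\<lambda>i. rr (vs!j) i * rr ?v i * rr b i))) (Eg \<alpha> \<beta> (\<lambda>i. rr (vs!j) i * rr b i * rr b i)))"
        unfolding Eg_add Eg_smul
      proof (rule Eg_cong)
        fix i assume i: "i < \<beta>"
        show "(rr (vs!j) i * rr ?vb i * rr ?vb i) mod 3 =
          (rr (vs!j) i * rr ?v i * rr ?v i + (2 * (rr (vs!j) i * rr ?v i * rr b i) + rr (vs!j) i * rr b i * rr b i)) mod 3"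
          using pt_quad[OF in3 in3 in3, of "rr (vs!j) i" "rr ?v i" "rr b i"] rr_range rrv[OF i] by simp
      qed
      moreover have "Eg \<alpha> \<beta> (\<lambda>i. rr (vs!j) i * rr ?v i * rr b i) \<in> SG" using Ib j m by blast
      moreover have "Eg \<alpha> \<beta> (\<lambda>i. rr (vs!j) i * rr b i * rr b i) \<in> SG" using Ib j by blast
      ultimately show ?thesis
        using closed3_add[OF cl tripG[OF j m m] closed3_add[OF cl closed3_smul[OF cl] ]] by simp
    qed
    show ?thesis unfolding X_def using vbs P I1 I2 I3 by simp
  qed
  have "C \<subseteq> X"
  proof (rule gen_ind[OF gm us_sp vs_sp XS zero])
    show "\<forall>u\<in>set us. \<forall>b\<in>X. cw_add u b \<in> X" using stepu by blast
    show "\<forall>v\<in>set vs. \<forall>b\<in>X. cw_add v b \<in> X"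
    proof (intro ballI)
      fix v b assume "v \<in> set vs" "b \<in> X"
      then obtain m where "m < length vs" "v = vs ! m" by (auto simp: in_set_conv_nth)
      then show "cw_add v b \<in> X" using stepv \<open>b \<in> X\<close> by blast
    qed
  qed
  then show ?thesis unfolding X_def by blast
qed

lemma part_i: "span3 (\<alpha> + 3 * \<beta>) (Phi ` C) = SG"
proof
  show "SG \<subseteq> span3 (\<alpha> + 3 * \<beta>) (Phi ` C)" by (rule sup_part)
  show "span3 (\<alpha> + 3 * \<beta>) (Phi ` C) \<subseteq> SG" by (rule span_least[OF sub_part SG_closed])
qed

end


definition Kt :: "nat \<Rightarrow> nat \<Rightarrow> (nat \<Rightarrow> int) \<Rightarrow> int list \<times> int list" where
  "Kt \<alpha> \<beta> h = (replicate \<alpha> 0, map (\<lambda>i. 3 * (h i mod 3)) [0..<\<beta>])"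

lemma Kt_space: "Kt \<alpha> \<beta> h \<in> space \<alpha> \<beta>"
proof -
  have "0 \<le> h i mod 3" "h i mod 3 \<le> 2" for i by simp_all
  then show ?thesis by (auto simp: space_iff Kt_def)
qed

lemma Kt_rr: "i < \<beta> \<Longrightarrow> rr (Kt \<alpha> \<beta> h) i = 0"
  by (simp add: rr_def Kt_def)

lemma Phi_Kt: "Phi (Kt \<alpha> \<beta> h) = Eg \<alpha> \<beta> h"
proof -
  have "phi (3 * (h i mod 3)) = rep3 (h i mod 3)" for i
  proof -
    have "(3 * (h i mod 3)) mod 9 = 3 * (h i mod 3)"
      using pos_mod_bound[of 3 "h i"] pos_mod_sign[of 3 "h i"] by simp
    then show ?thesis using phi3[of "h i mod 3"] by simp
  qed
  then show ?thesis by (simp add: Phi_def Kt_def Eg_def comp_def)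
qed

lemma Phi_add_T: assumes a: "a \<in> space \<alpha> \<beta>" and t: "t \<in> space \<alpha> \<beta>" and rt: "\<forall>i<\<beta>. rr t i = 0"
  shows "Phi (cw_add a t) = add3 (Phi a) (Phi t)"
proof -
  have EQ: "Eg \<alpha> \<beta> (\<lambda>i. Qf (snd a!i) (snd t!i)) = replicate (\<alpha> + 3 * \<beta>) 0"
    by (rule Eg_zero) (simp only: Qf_rr, simp add: rt Qf_def)
  have "add3 (Phi a) (Phi t) = add3 (Phi (cw_add a t)) (replicate (\<alpha> + 3 * \<beta>) 0)" using PhiAdd[OF a t] EQ by simp
  also have "\<dots> = Phi (cw_add a t)" using add3_zero[OF Phi_vec[OF cw_add_space[OF a t]]] .
  finally show ?thesis by simp
qed

lemma add3_swap: "length a = n \<Longrightarrow> length b = n \<Longrightarrow> length c = n \<Longrightarrow> length d = n \<Longrightarrow>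
  add3 (add3 a b) (add3 c d) = add3 (add3 a c) (add3 b d)"
  by (rule nth_equalityI) (simp_all add: mod_add_eq ac_simps)

lemma cw_add_swap: "a \<in> space \<alpha> \<beta> \<Longrightarrow> b \<in> space \<alpha> \<beta> \<Longrightarrow> c \<in> space \<alpha> \<beta> \<Longrightarrow> d \<in> space \<alpha> \<beta> \<Longrightarrow>
  cw_add (cw_add a b) (cw_add c d) = cw_add (cw_add a c) (cw_add b d)"
proof -
  assume s: "a \<in> space \<alpha> \<beta>" "b \<in> space \<alpha> \<beta>" "c \<in> space \<alpha> \<beta>" "d \<in> space \<alpha> \<beta>"
  have "cw_add (cw_add a b) (cw_add c d) = cw_add a (cw_add b (cw_add c d))"
    using cw_add_assoc[OF s(1) s(2) cw_add_space[OF s(3) s(4)]] .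
  also have "cw_add b (cw_add c d) = cw_add (cw_add b c) d" using cw_add_assoc[OF s(2) s(3) s(4)] by simp
  also have "cw_add b c = cw_add c b" by (rule cw_add_comm)
  also have "cw_add (cw_add c b) d = cw_add c (cw_add b d)" using cw_add_assoc[OF s(3) s(2) s(4)] .
  also have "cw_add a (cw_add c (cw_add b d)) = cw_add (cw_add a c) (cw_add b d)"
    using cw_add_assoc[OF s(1) s(3) cw_add_space[OF s(2) s(4)]] by simp
  finally show ?thesis .
qed

context
  fixes \<alpha> \<beta> :: nat and C :: "(int list \<times> int list) set"
  assumes C: "additive_code \<alpha> \<beta> C"
begin

definition "TT = {t \<in> space \<alpha> \<beta>. fst t = replicate \<alpha> 0 \<and> (\<forall>i<\<beta>. rr t i = 0) \<and> Phi t \<in> span3 (\<alpha> + 3 * \<beta>) (Phi ` C)}"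
definition "DD = {cw_add c t | c t. c \<in> C \<and> t \<in> TT}"

lemma TT_sp: "t \<in> TT \<Longrightarrow> t \<in> space \<alpha> \<beta>" by (simp add: TT_def)

lemma TT_zero: "zero_cw \<alpha> \<beta> \<in> TT"
  unfolding TT_def using zero_space Phi_zero closed3_zero[OF SS_closed[OF C]] by (simp add: rr_def)

lemma TT_add: assumes t1: "t1 \<in> TT" and t2: "t2 \<in> TT" shows "cw_add t1 t2 \<in> TT"
proof -
  have s: "t1 \<in> space \<alpha> \<beta>" "t2 \<in> space \<alpha> \<beta>" using t1 t2 TT_sp by auto
  have r: "\<forall>i<\<beta>. rr t2 i = 0" "\<forall>i<\<beta>. rr t1 i = 0" using t1 t2 by (auto simp: TT_def)
  have f: "fst (cw_add t1 t2) = replicate \<alpha> 0" using t1 t2 by (simp add: TT_def fst_cw_add add3_replicate0)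
  have rr12: "\<forall>i<\<beta>. rr (cw_add t1 t2) i = 0" using rr_add[OF s] r by simp
  have "Phi (cw_add t1 t2) = add3 (Phi t1) (Phi t2)" using Phi_add_T[OF s r(1)] .
  then have "Phi (cw_add t1 t2) \<in> span3 (\<alpha> + 3 * \<beta>) (Phi ` C)"
    using closed3_add[OF SS_closed[OF C]] t1 t2 by (simp add: TT_def)
  then show ?thesis unfolding TT_def using cw_add_space[OF s] f rr12 by simp
qed

lemma DD_sp: "d \<in> DD \<Longrightarrow> d \<in> space \<alpha> \<beta>"
  unfolding DD_def using C additive_space TT_sp cw_add_space by blast

lemma DD_additive: "additive_code \<alpha> \<beta> DD"
  unfolding additive_code_def
proof (intro conjI ballI)
  show "0 < \<alpha> + \<beta>" using C by (simp add: additive_code_def)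
  show "DD \<subseteq> space \<alpha> \<beta>" using DD_sp by blast
  show "zero_cw \<alpha> \<beta> \<in> DD" unfolding DD_def
    by (rule CollectI, rule exI[of _ "zero_cw \<alpha> \<beta>"], rule exI[of _ "zero_cw \<alpha> \<beta>"])
      (simp add: cw_add_zero[OF zero_space] additive_zero[OF C] TT_zero)
  fix a b assume a: "a \<in> DD" and b: "b \<in> DD"
  obtain c1 t1 where 1: "a = cw_add c1 t1" "c1 \<in> C" "t1 \<in> TT" using a unfolding DD_def by blast
  obtain c2 t2 where 2: "b = cw_add c2 t2" "c2 \<in> C" "t2 \<in> TT" using b unfolding DD_def by blast
  have "cw_add a b = cw_add (cw_add c1 c2) (cw_add t1 t2)"
    using 1 2 cw_add_swap[OF additive_space[OF C 1(2)] TT_sp[OF 1(3)] additive_space[OF C 2(2)] TT_sp[OF 2(3)]] by simp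
  moreover have "cw_add c1 c2 \<in> C" using additive_add[OF C 1(2) 2(2)] .
  moreover have "cw_add t1 t2 \<in> TT" using TT_add 1 2 by blast
  ultimately show "cw_add a b \<in> DD" unfolding DD_def by blast
qed

lemma Phi_DD: "d \<in> DD \<Longrightarrow> \<exists>c t. c \<in> C \<and> t \<in> TT \<and> Phi d = add3 (Phi c) (Phi t) \<and> d = cw_add c t"
proof -
  assume "d \<in> DD"
  then obtain c t where ct: "d = cw_add c t" "c \<in> C" "t \<in> TT" unfolding DD_def by blast
  have "Phi d = add3 (Phi c) (Phi t)"
    using Phi_add_T[OF additive_space[OF C ct(2)] TT_sp[OF ct(3)]] ct by (simp add: TT_def)
  then show ?thesis using ct by blast
qed

lemma part_iii: "span3 (\<alpha> + 3 * \<beta>) (Phi ` C) = Phi ` DD"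
proof
  let ?N = "\<alpha> + 3 * \<beta>"
  have cl: "closed3 ?N (span3 ?N (Phi ` C))" using SS_closed[OF C] .
  show "Phi ` DD \<subseteq> span3 ?N (Phi ` C)"
  proof
    fix y assume "y \<in> Phi ` DD"
    then obtain d where d: "d \<in> DD" "y = Phi d" by blast
    then obtain c t where "c \<in> C" "t \<in> TT" "Phi d = add3 (Phi c) (Phi t)" using Phi_DD by blast
    then show "y \<in> span3 ?N (Phi ` C)" using d closed3_add[OF cl Phi_in_SS[OF C]] by (simp add: TT_def)
  qed
  have clD: "closed3 ?N (Phi ` DD)"
    unfolding closed3_def
  proof (intro conjI ballI)
    show "Phi ` DD \<subseteq> vec3 ?N" using DD_sp Phi_vec by blast
    show "replicate ?N 0 \<in> Phi ` DD" using Phi_zero additive_zero[OF DD_additive] by (metis image_eqI)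
    fix x y assume x: "x \<in> Phi ` DD" and y: "y \<in> Phi ` DD"
    obtain d1 d2 where d: "d1 \<in> DD" "d2 \<in> DD" "x = Phi d1" "y = Phi d2" using x y by blast
    obtain c1 t1 where 1: "c1 \<in> C" "t1 \<in> TT" "Phi d1 = add3 (Phi c1) (Phi t1)" using Phi_DD[OF d(1)] by blast
    obtain c2 t2 where 2: "c2 \<in> C" "t2 \<in> TT" "Phi d2 = add3 (Phi c2) (Phi t2)" using Phi_DD[OF d(2)] by blast
    have s: "c1 \<in> space \<alpha> \<beta>" "c2 \<in> space \<alpha> \<beta>" "t1 \<in> space \<alpha> \<beta>" "t2 \<in> space \<alpha> \<beta>"
      using 1 2 additive_space[OF C] TT_sp by auto
    let ?K = "Kt \<alpha> \<beta> (\<lambda>i. Qf (snd c1!i) (snd c2!i))"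
    have PK: "Phi ?K = Eg \<alpha> \<beta> (\<lambda>i. Qf (snd c1!i) (snd c2!i))" by (rule Phi_Kt)
    have KT: "?K \<in> TT"
    proof -
      have "Eg \<alpha> \<beta> (\<lambda>i. Qf (snd c1!i) (snd c2!i)) = Eg \<alpha> \<beta> (\<lambda>i. Qf (rr c1 i) (rr c2 i))" using Qf_rr by simp
      then show ?thesis unfolding TT_def using Kt_space Kt_rr PK EgQ_in[OF C 1(1) 2(1)] by (simp add: Kt_def)
    qed
    have T3: "cw_add ?K (cw_add t1 t2) \<in> TT" using TT_add[OF KT TT_add[OF 1(2) 2(2)]] .
    have Ks: "?K \<in> space \<alpha> \<beta>" by (rule Kt_space)
    have L: "length (Phi c1) = ?N" "length (Phi c2) = ?N" "length (Phi t1) = ?N" "length (Phi t2) = ?N"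
      "length (Phi ?K) = ?N" "length (Phi (cw_add c1 c2)) = ?N" "length (Phi (cw_add t1 t2)) = ?N"
      using s Ks Phi_vec vec3_len cw_add_space by blast+
    have "add3 x y = add3 (add3 (Phi c1) (Phi c2)) (add3 (Phi t1) (Phi t2))"
      using d 1 2 add3_swap[OF L(1) L(3) L(2) L(4)] by simp
    also have "add3 (Phi c1) (Phi c2) = add3 (Phi (cw_add c1 c2)) (Phi ?K)" using PhiAdd[OF s(1) s(2)] PK by simp
    also have "add3 (Phi t1) (Phi t2) = Phi (cw_add t1 t2)"
      using Phi_add_T[OF s(3) s(4)] 2(2) by (simp add: TT_def)
    also have "add3 (add3 (Phi (cw_add c1 c2)) (Phi ?K)) (Phi (cw_add t1 t2)) =
       add3 (Phi (cw_add c1 c2)) (add3 (Phi ?K) (Phi (cw_add t1 t2)))"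
      using add3_assoc[OF L(6) L(5) L(7)] .
    also have "add3 (Phi ?K) (Phi (cw_add t1 t2)) = Phi (cw_add ?K (cw_add t1 t2))"
      using Phi_add_T[OF Ks cw_add_space[OF s(3) s(4)]] TT_add[OF 1(2) 2(2)] by (simp add: TT_def)
    also have "add3 (Phi (cw_add c1 c2)) (Phi (cw_add ?K (cw_add t1 t2))) = Phi (cw_add (cw_add c1 c2) (cw_add ?K (cw_add t1 t2)))"
      using Phi_add_T[OF cw_add_space[OF s(1) s(2)] TT_sp[OF T3]] T3 by (simp add: TT_def)
    finally have "add3 x y = Phi (cw_add (cw_add c1 c2) (cw_add ?K (cw_add t1 t2)))" .
    moreover have "cw_add (cw_add c1 c2) (cw_add ?K (cw_add t1 t2)) \<in> DD"
      unfolding DD_def using additive_add[OF C 1(1) 2(1)] T3 by blast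
    ultimately show "add3 x y \<in> Phi ` DD" by blast
  qed
  have "Phi ` C \<subseteq> Phi ` DD"
  proof
    fix y assume "y \<in> Phi ` C"
    then obtain c where c: "c \<in> C" "y = Phi c" by blast
    have "c = cw_add c (zero_cw \<alpha> \<beta>)" using cw_add_zero[OF additive_space[OF C c(1)]] by simp
    then have "c \<in> DD" unfolding DD_def using c TT_zero by blast
    then show "y \<in> Phi ` DD" using c by blast
  qed
  then show "span3 ?N (Phi ` C) \<subseteq> Phi ` DD" using span_least[OF _ clD] by blast
qed

end


lemma card_lists_eq': "finite A \<Longrightarrow> card {ls. length ls = n \<and> set ls \<subseteq> A} = card A ^ n"
proof -
  assume "finite A"
  have "{ls. length ls = n \<and> set ls \<subseteq> A} = {xs. set xs \<subseteq> A \<and> length xs = n}" by blast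
  then show ?thesis using card_lists_length_eq[OF \<open>finite A\<close>] by simp
qed

lemma finite_lists': "finite A \<Longrightarrow> finite {ls. length ls = n \<and> set ls \<subseteq> A}"
proof -
  assume "finite A"
  have "{ls. length ls = n \<and> set ls \<subseteq> A} = {xs. set xs \<subseteq> A \<and> length xs = n}" by blast
  then show ?thesis using \<open>finite A\<close> by (simp add: finite_lists_length_eq)
qed

lemma card_C: "is_gen_matrix \<alpha> \<beta> C us vs \<Longrightarrow> card C = 3 ^ (length us + 2 * length vs)"
proof -
  assume gm: "is_gen_matrix \<alpha> \<beta> C us vs"
  let ?A = "{ls. length ls = length us \<and> set ls \<subseteq> {0..2::int}}"
  let ?B = "{ns. length ns = length vs \<and> set ns \<subseteq> {0..8::int}}"
  have "bij_betw (\<lambda>(ls, ns). gen_comb \<alpha> \<beta> us vs ls ns) (?A \<times> ?B) C" using gm unfolding is_gen_matrix_def by blast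
  then have "card C = card (?A \<times> ?B)" by (rule bij_betw_same_card[symmetric])
  also have "\<dots> = 3 ^ length us * 9 ^ length vs" by (simp add: card_cartesian_product card_lists_eq')
  also have "(9::nat) ^ length vs = 3 ^ (2 * length vs)" by (simp add: power_mult)
  finally show ?thesis by (simp add: power_add)
qed

lemma fiber_card:
  assumes fin: "finite A" and finK: "finite K"
    and fib: "\<And>a0. a0 \<in> A \<Longrightarrow> \<exists>g. inj_on g {a\<in>A. f a = f a0} \<and> g ` {a\<in>A. f a = f a0} \<subseteq> K"
  shows "card A \<le> card (f ` A) * card K"
proof -
  have A: "A = (\<Union>b\<in>f ` A. {a\<in>A. f a = b})" by blast
  have "card A \<le> (\<Sum>b\<in>f ` A. card {a\<in>A. f a = b})"
    by (subst A) (rule card_UN_le, simp add: fin)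
  also have "\<dots> \<le> (\<Sum>b\<in>f ` A. card K)"
  proof (rule sum_mono)
    fix b assume "b \<in> f ` A"
    then obtain a0 where a0: "a0 \<in> A" "b = f a0" by blast
    obtain g where g: "inj_on g {a\<in>A. f a = f a0}" "g ` {a\<in>A. f a = f a0} \<subseteq> K" using fib[OF a0(1)] by blast
    have "card {a\<in>A. f a = f a0} = card (g ` {a\<in>A. f a = f a0})" using card_image[OF g(1)] by simp
    also have "\<dots> \<le> card K" using card_mono[OF finK g(2)] .
    finally show "card {a\<in>A. f a = b} \<le> card K" using a0 by simp
  qed
  also have "\<dots> = card (f ` A) * card K" by simp
  finally show ?thesis .
qed

definition sig :: "int list \<times> int list \<Rightarrow> int list" where
  "sig b = map (\<lambda>s. s mod 3) (snd b)"

lemma sig_vec: "b \<in> space \<alpha> \<beta> \<Longrightarrow> sig b \<in> vec3 \<beta>"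
  by (simp add: sig_def vec3_iff space_len2)

lemma sig_nth: "b \<in> space \<alpha> \<beta> \<Longrightarrow> i < \<beta> \<Longrightarrow> sig b ! i = rr b i"
  by (simp add: sig_def rr_def space_len2)

lemma sig_add: assumes a: "a \<in> space \<alpha> \<beta>" and b: "b \<in> space \<alpha> \<beta>"
  shows "sig (cw_add a b) = add3 (sig a) (sig b)"
proof (rule nth_equalityI)
  show "length (sig (cw_add a b)) = length (add3 (sig a) (sig b))"
    using a b by (simp add: sig_def space_len2)
  fix i assume "i < length (sig (cw_add a b))"
  then have i: "i < \<beta>" using a b by (simp add: sig_def space_len2)
  show "sig (cw_add a b) ! i = add3 (sig a) (sig b) ! i"
    using sig_nth[OF cw_add_space[OF a b] i] sig_nth[OF a i] sig_nth[OF b i] rr_add[OF a b i] i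
      vec3_len[OF sig_vec[OF a]] vec3_len[OF sig_vec[OF b]] by simp
qed

lemma sig_zero_iff: assumes b: "b \<in> space \<alpha> \<beta>" shows "sig b = replicate \<beta> 0 \<longleftrightarrow> (\<forall>i<\<beta>. rr b i = 0)"
proof -
  have "sig b = replicate \<beta> 0 \<longleftrightarrow> (\<forall>i<\<beta>. sig b ! i = 0)"
    using vec3_len[OF sig_vec[OF b]] by (auto simp: list_eq_iff_nth_eq)
  then show ?thesis using sig_nth[OF b] by simp
qed

lemma cw_smul_add: "a \<in> space \<alpha> \<beta> \<Longrightarrow> b \<in> space \<alpha> \<beta> \<Longrightarrow> cw_smul k (cw_add a b) = cw_add (cw_smul k a) (cw_smul k b)"
  apply (rule cw_eqI)
   apply (simp add: fst_cw_add fst_cw_smul smul3_add3 space_len1)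
  apply (rule nth_equalityI)
   apply (simp add: space_len2)
  apply (simp add: space_len2 mod_simps algebra_simps)
  done

lemma sub3_closed: assumes C: "additive_code \<alpha> \<beta> C" shows "closed3 \<alpha> (fst ` sub3 \<alpha> \<beta> C)"
  unfolding closed3_def
proof (intro conjI ballI)
  show "fst ` sub3 \<alpha> \<beta> C \<subseteq> vec3 \<alpha>"
  proof
    fix x assume "x \<in> fst ` sub3 \<alpha> \<beta> C"
    then obtain a where "a \<in> C" "x = fst a" by (auto simp: sub3_def)
    then show "x \<in> vec3 \<alpha>" using space_fst[OF additive_space[OF C]] by simp
  qed
  have "cw_smul 3 (zero_cw \<alpha> \<beta>) = zero_cw \<alpha> \<beta>"
    by (rule cw_eqI) (simp_all add: fst_cw_smul cw_smul_def)
  then have "zero_cw \<alpha> \<beta> \<in> sub3 \<alpha> \<beta> C" using additive_zero[OF C] by (simp add: sub3_def)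
  then show "replicate \<alpha> 0 \<in> fst ` sub3 \<alpha> \<beta> C" by (rule rev_image_eqI) simp
  fix x y assume x: "x \<in> fst ` sub3 \<alpha> \<beta> C" and y: "y \<in> fst ` sub3 \<alpha> \<beta> C"
  obtain a b where ab: "a \<in> sub3 \<alpha> \<beta> C" "b \<in> sub3 \<alpha> \<beta> C" "x = fst a" "y = fst b" using x y by blast
  have s: "a \<in> space \<alpha> \<beta>" "b \<in> space \<alpha> \<beta>" "a \<in> C" "b \<in> C" using ab additive_space[OF C] by (auto simp: sub3_def)
  have "cw_smul 3 (cw_add a b) = cw_add (zero_cw \<alpha> \<beta>) (zero_cw \<alpha> \<beta>)"
    using cw_smul_add[OF s(1) s(2)] ab by (simp add: sub3_def)
  also have "\<dots> = zero_cw \<alpha> \<beta>" using cw_add_zero[OF zero_space] .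
  finally have "cw_add a b \<in> sub3 \<alpha> \<beta> C" using additive_add[OF C s(3) s(4)] by (simp add: sub3_def)
  then show "add3 x y \<in> fst ` sub3 \<alpha> \<beta> C" by (rule rev_image_eqI) (simp add: fst_cw_add ab)
qed


lemma finite_space: "finite (space \<alpha> \<beta>)"
proof -
  have "space \<alpha> \<beta> \<subseteq> {xs. set xs \<subseteq> {0..2::int} \<and> length xs = \<alpha>} \<times> {xs. set xs \<subseteq> {0..8::int} \<and> length xs = \<beta>}"
    by (auto simp: space_def)
  then show ?thesis by (rule finite_subset) (simp add: finite_lists_length_eq)
qed

lemma sig_zero_cw: "sig (zero_cw \<alpha> \<beta>) = replicate \<beta> 0"
  by (simp add: sig_def)

lemma sigC:
  assumes C: "additive_code \<alpha> \<beta> C" and gm: "is_gen_matrix \<alpha> \<beta> C us vs"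
  shows "sig ` C \<subseteq> spanL \<beta> (map sig vs)"
proof -
  let ?Y = "spanL \<beta> (map sig vs)"
  have mv: "set (map sig vs) \<subseteq> vec3 \<beta>" using vs_sp[OF C gm] sig_vec by auto
  have Y: "closed3 \<beta> ?Y" "set (map sig vs) \<subseteq> ?Y" using spanL_closed[OF mv] by auto
  define X where "X = {b \<in> space \<alpha> \<beta>. sig b \<in> ?Y}"
  have "C \<subseteq> X"
  proof (rule gen_ind[OF gm us_sp[OF C gm] vs_sp[OF C gm]])
    show "X \<subseteq> space \<alpha> \<beta>" unfolding X_def by blast
    show "zero_cw \<alpha> \<beta> \<in> X" unfolding X_def using zero_space sig_zero_cw closed3_zero[OF Y(1)] by simp
    show "\<forall>u\<in>set us. \<forall>b\<in>X. cw_add u b \<in> X"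
    proof (intro ballI)
      fix u b assume u: "u \<in> set us" and b: "b \<in> X"
      have us: "u \<in> space \<alpha> \<beta>" using u us_sp[OF C gm] by blast
      have o3: "order3 \<alpha> \<beta> u" using gm u by (simp add: is_gen_matrix_def)
      have bs: "b \<in> space \<alpha> \<beta>" "sig b \<in> ?Y" using b unfolding X_def by auto
      have "sig u = replicate \<beta> 0" using sig_zero_iff[OF us] order3_rr[OF us o3] by simp
      then have "sig (cw_add u b) = sig b" using sig_add[OF us bs(1)] add3_zero_left[OF sig_vec[OF bs(1)]] by simp
      then show "cw_add u b \<in> X" unfolding X_def using bs cw_add_space[OF us bs(1)] by simp
    qed
    show "\<forall>v\<in>set vs. \<forall>b\<in>X. cw_add v b \<in> X"
    proof (intro ballI)
      fix v b assume v: "v \<in> set vs" and b: "b \<in> X"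
      have vsp: "v \<in> space \<alpha> \<beta>" using v vs_sp[OF C gm] by blast
      have bs: "b \<in> space \<alpha> \<beta>" "sig b \<in> ?Y" using b unfolding X_def by auto
      have "sig v \<in> ?Y" using Y(2) v by auto
      then have "sig (cw_add v b) \<in> ?Y" using sig_add[OF vsp bs(1)] closed3_add[OF Y(1) _ bs(2)] by simp
      then show "cw_add v b \<in> X" unfolding X_def using cw_add_space[OF vsp bs(1)] by simp
    qed
  qed
  then show ?thesis unfolding X_def by blast
qed

lemma card_Z: "card {y. length y = \<beta> \<and> set y \<subseteq> {0,3,6::int}} = 3 ^ \<beta>"
proof -
  have f: "finite {0,3,6::int}" by simp
  have c: "card {0,3,6::int} = 3" by simp
  show ?thesis by (simp only: card_lists_eq'[OF f] c)
qed

lemma card_DD: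
  assumes C: "additive_code \<alpha> \<beta> C" and gm: "is_gen_matrix \<alpha> \<beta> C us vs"
  shows "card (DD \<alpha> \<beta> C) \<le> 3 ^ (length vs) * (3 ^ dim3 \<alpha> (fst ` sub3 \<alpha> \<beta> C) * 3 ^ \<beta>)"
proof -
  let ?D = "DD \<alpha> \<beta> C"
  let ?F = "fst ` sub3 \<alpha> \<beta> C"
  let ?Z = "{y. length y = \<beta> \<and> set y \<subseteq> {0,3,6::int}}"
  let ?K = "?F \<times> ?Z"
  have Dadd: "additive_code \<alpha> \<beta> ?D" using DD_additive[OF C] .
  have finD: "finite ?D" using finite_subset[OF _ finite_space] DD_sp[OF C] by blast
  have finF: "finite ?F" using closed3_finite[OF sub3_closed[OF C]] .
  have finZ: "finite ?Z" using finite_lists'[of "{0,3,6::int}" \<beta>] by simp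
  have cK: "card ?K = 3 ^ dim3 \<alpha> ?F * 3 ^ \<beta>"
    using dim3_card[OF sub3_closed[OF C]] card_Z by (simp add: card_cartesian_product)
  have D0: "e \<in> ?K" if e: "e \<in> ?D" "sig e = replicate \<beta> 0" for e
  proof -
    obtain c t where ct: "c \<in> C" "t \<in> TT \<alpha> \<beta> C" "e = cw_add c t" using e(1) unfolding DD_def[OF C] by blast
    have cs: "c \<in> space \<alpha> \<beta>" and ts: "t \<in> space \<alpha> \<beta>" using ct additive_space[OF C] TT_sp[OF C] by auto
    have es: "e \<in> space \<alpha> \<beta>" using e(1) DD_sp[OF C] by blast
    have rt: "rr t i = 0" if "i < \<beta>" for i using ct(2) that by (simp add: TT_def[OF C])
    have ft: "fst t = replicate \<alpha> 0" using ct(2) by (simp add: TT_def[OF C])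
    have re: "rr e i = 0" if "i < \<beta>" for i using sig_zero_iff[OF es] e(2) that by simp
    have rc: "rr c i = 0" if i: "i < \<beta>" for i
      using re[OF i] rr_add[OF cs ts i] rt[OF i] ct(3) rr_range[of c i] by simp
    have "cw_smul 3 c = zero_cw \<alpha> \<beta>"
    proof (rule cw_eqI)
      show "fst (cw_smul 3 c) = fst (zero_cw \<alpha> \<beta>)"
        by (rule nth_equalityI) (simp_all add: fst_cw_smul space_len1[OF cs])
      show "snd (cw_smul 3 c) = snd (zero_cw \<alpha> \<beta>)"
      proof (rule nth_equalityI)
        show "length (snd (cw_smul 3 c)) = length (snd (zero_cw \<alpha> \<beta>))" by (simp add: space_len2[OF cs])
        fix i assume "i < length (snd (cw_smul 3 c))"
        then have i: "i < \<beta>" by (simp add: space_len2[OF cs])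
        have "(3 * snd c ! i) mod 9 = 3 * (snd c ! i mod 3)" using mod_mult_mult1[of 3 "snd c ! i" 3] by simp
        then show "snd (cw_smul 3 c) ! i = snd (zero_cw \<alpha> \<beta>) ! i"
          using rc[OF i] i by (simp add: space_len2[OF cs] rr_def)
      qed
    qed
    then have "c \<in> sub3 \<alpha> \<beta> C" using ct(1) by (simp add: sub3_def)
    moreover have "fst e = fst c" using ct(3) ft add3_zero[OF space_fst[OF cs]] by (simp add: fst_cw_add)
    ultimately have f: "fst e \<in> ?F" by (metis image_eqI)
    have "snd e \<in> ?Z"
    proof -
      have "length (snd e) = \<beta>" using space_len2[OF es] .
      moreover have "\<forall>x\<in>set (snd e). x \<in> {0,3,6}"
      proof
        fix x assume "x \<in> set (snd e)"
        then obtain i where i: "i < \<beta>" "x = snd e ! i" using space_len2[OF es] by (auto simp: in_set_conv_nth)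
        have "0 \<le> x" "x \<le> 8" "x mod 3 = 0" using space_nth2[OF es i(1)] re[OF i(1)] i by (auto simp: rr_def)
        then have "x = 0 \<or> x = 3 \<or> x = 6" by presburger
        then show "x \<in> {0,3,6}" by blast
      qed
      ultimately show ?thesis by blast
    qed
    then show ?thesis using f by (cases e) auto
  qed
  have fib: "\<exists>g. inj_on g {a\<in>?D. sig a = sig a0} \<and> g ` {a\<in>?D. sig a = sig a0} \<subseteq> ?K" if a0: "a0 \<in> ?D" for a0
  proof (intro exI conjI)
    have a0s: "a0 \<in> space \<alpha> \<beta>" using a0 DD_sp[OF C] by blast
    have ns: "cw_neg a0 \<in> space \<alpha> \<beta>" using cw_neg_space[OF a0s] .
    show "inj_on (\<lambda>d. cw_add d (cw_neg a0)) {a\<in>?D. sig a = sig a0}"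
      by (rule inj_onI) (use cw_cancel[OF _ _ ns] DD_sp[OF C] in blast)
    show "(\<lambda>d. cw_add d (cw_neg a0)) ` {a\<in>?D. sig a = sig a0} \<subseteq> ?K"
    proof
      fix y assume "y \<in> (\<lambda>d. cw_add d (cw_neg a0)) ` {a\<in>?D. sig a = sig a0}"
      then obtain d where d: "d \<in> ?D" "sig d = sig a0" "y = cw_add d (cw_neg a0)" by blast
      have ds: "d \<in> space \<alpha> \<beta>" using d DD_sp[OF C] by blast
      have yD: "y \<in> ?D" using d additive_add[OF Dadd d(1) additive_neg[OF Dadd a0]] by simp
      have "sig y = add3 (sig a0) (sig (cw_neg a0))" using sig_add[OF ds ns] d by simp
      also have "\<dots> = sig (cw_add a0 (cw_neg a0))" using sig_add[OF a0s ns] by simp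
      also have "\<dots> = replicate \<beta> 0" using cw_add_neg[OF a0s] sig_zero_cw by simp
      finally show "y \<in> ?K" using D0[OF yD] by simp
    qed
  qed
  have "card ?D \<le> card (sig ` ?D) * card ?K"
    by (rule fiber_card[OF finD _ fib]) (simp add: finF finZ)
  moreover have "sig ` ?D \<subseteq> spanL \<beta> (map sig vs)"
  proof
    fix y assume "y \<in> sig ` ?D"
    then obtain d where d: "d \<in> ?D" "y = sig d" by blast
    then obtain c t where ct: "c \<in> C" "t \<in> TT \<alpha> \<beta> C" "d = cw_add c t" unfolding DD_def[OF C] by blast
    have cs: "c \<in> space \<alpha> \<beta>" and ts: "t \<in> space \<alpha> \<beta>" using ct additive_space[OF C] TT_sp[OF C] by auto
    have "sig t = replicate \<beta> 0" using sig_zero_iff[OF ts] ct(2) by (simp add: TT_def[OF C])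
    then have "sig d = sig c" using ct(3) sig_add[OF cs ts] add3_zero[OF sig_vec[OF cs]] by simp
    then show "y \<in> spanL \<beta> (map sig vs)" using sigC[OF C gm] ct(1) d by blast
  qed
  then have "card (sig ` ?D) \<le> 3 ^ length vs"
    using card_mono[OF closed3_finite[OF conjunct1[OF spanL_closed]]] spanL_card[of \<beta> "map sig vs"]
      sig_vec vs_sp[OF C gm]
    by (smt (verit, ccfv_threshold) imageE length_map order_trans set_map subset_iff)
  ultimately show ?thesis using cK
    by (metis (no_types, lifting) le_trans mult_le_mono1)
qed


definition idx2 :: "nat \<Rightarrow> (nat \<times> nat) set" where "idx2 n = {(k, l). l \<le> k \<and> k < n}"
definition idx3 :: "nat \<Rightarrow> (nat \<times> nat \<times> nat) set" where "idx3 n = {(x, y, z). x \<le> y \<and> y \<le> z \<and> z < n}"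

lemma idx2_fin: "finite (idx2 n)"
  by (rule finite_subset[of _ "{..<n} \<times> {..<n}"]) (auto simp: idx2_def)

lemma idx2_Suc: "idx2 (Suc n) = idx2 n \<union> (\<lambda>l. (n, l)) ` {..n}"
  by (auto simp: idx2_def)

lemma idx2_card: "card (idx2 n) = (n + 1 choose 2)"
proof (induction n)
  case 0 then show ?case by (simp add: idx2_def)
next
  case (Suc n)
  have d: "idx2 n \<inter> (\<lambda>l. (n, l)) ` {..n} = {}" by (auto simp: idx2_def)
  have "card (idx2 (Suc n)) = card (idx2 n) + card ((\<lambda>l. (n, l)) ` {..n})"
    unfolding idx2_Suc by (rule card_Un_disjoint[OF idx2_fin _ d]) simp
  also have "card ((\<lambda>l. (n, l)) ` {..n}) = Suc n" by (subst card_image) (auto simp: inj_on_def)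
  finally show ?case using Suc binomial_Suc_Suc[of "Suc n" 1] by (simp add: numeral_2_eq_2)
qed

lemma idx3_fin: "finite (idx3 n)"
  by (rule finite_subset[of _ "{..<n} \<times> {..<n} \<times> {..<n}"]) (auto simp: idx3_def)

lemma idx3_Suc: "idx3 (Suc n) = idx3 n \<union> (\<lambda>(k, l). (l, k, n)) ` idx2 (Suc n)"
  by (auto simp: idx3_def idx2_def image_iff)

lemma idx3_card: "card (idx3 n) = (n + 2 choose 3)"
proof (induction n)
  case 0
  have "idx3 0 = {}" by (auto simp: idx3_def)
  then show ?case by simp
next
  case (Suc n)
  have d: "idx3 n \<inter> (\<lambda>(k, l). (l, k, n)) ` idx2 (Suc n) = {}" by (auto simp: idx3_def)
  have inj: "inj_on (\<lambda>(k, l). (l, k, n)) (idx2 (Suc n))" by (auto simp: inj_on_def)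
  have "card (idx3 (Suc n)) = card (idx3 n) + card ((\<lambda>(k, l). (l, k, n)) ` idx2 (Suc n))"
    unfolding idx3_Suc by (rule card_Un_disjoint[OF idx3_fin _ d]) (simp add: idx2_fin)
  also have "card ((\<lambda>(k, l). (l, k, n)) ` idx2 (Suc n)) = (n + 2 choose 2)"
    using card_image[OF inj] idx2_card[of "Suc n"] by simp
  finally have "card (idx3 (Suc n)) = (n + 2 choose 3) + (n + 2 choose 2)" using Suc by simp
  also have "\<dots> = (Suc n + 2 choose 3)"
    using binomial_Suc_Suc[of "n + 2" 2] by (simp add: numeral_3_eq_3 numeral_2_eq_2)
  finally show ?case .
qed

lemma P2_card: "card (P2 vs) \<le> (length vs + 1 choose 2)"
proof -
  have "P2 vs = (\<lambda>(k, l). cw_smul 3 (cw_mult (vs ! k) (vs ! l))) ` idx2 (length vs)"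
    unfolding P2_def idx2_def by auto
  then have "card (P2 vs) \<le> card (idx2 (length vs))" using card_image_le[OF idx2_fin] by simp
  then show ?thesis using idx2_card by simp
qed

lemma P3_card: "card (P3 vs) \<le> (length vs + 2 choose 3)"
proof -
  have "P3 vs = (\<lambda>(x, y, z). cw_smul 3 (cw_mult (vs ! x) (cw_mult (vs ! y) (vs ! z)))) ` idx3 (length vs)"
  proof (rule set_eqI, rule iffI)
    fix w assume "w \<in> P3 vs"
    then obtain x y z where "w = cw_smul 3 (cw_mult (vs ! x) (cw_mult (vs ! y) (vs ! z)))" "x \<le> y" "y \<le> z" "z < length vs"
      unfolding P3_def by blast
    then show "w \<in> (\<lambda>(x, y, z). cw_smul 3 (cw_mult (vs ! x) (cw_mult (vs ! y) (vs ! z)))) ` idx3 (length vs)"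
      by (intro image_eqI[where x="(x, y, z)"]) (simp_all add: idx3_def)
  next
    fix w assume "w \<in> (\<lambda>(x, y, z). cw_smul 3 (cw_mult (vs ! x) (cw_mult (vs ! y) (vs ! z)))) ` idx3 (length vs)"
    then obtain p where p: "p \<in> idx3 (length vs)" "w = (\<lambda>(x, y, z). cw_smul 3 (cw_mult (vs ! x) (cw_mult (vs ! y) (vs ! z)))) p"
      by (rule imageE)
    obtain x y z where "p = (x, y, z)" by (cases p) auto
    then have "w = cw_smul 3 (cw_mult (vs ! x) (cw_mult (vs ! y) (vs ! z)))" "x \<le> y" "y \<le> z" "z < length vs"
      using p by (simp_all add: idx3_def)
    then show "w \<in> P3 vs" unfolding P3_def by blast
  qed
  then have "card (P3 vs) \<le> card (idx3 (length vs))" using card_image_le[OF idx3_fin] by simp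
  then show ?thesis using idx3_card by simp
qed

lemma P2_fin: "finite (P2 vs)"
proof -
  have "P2 vs = (\<lambda>(k, l). cw_smul 3 (cw_mult (vs ! k) (vs ! l))) ` idx2 (length vs)"
    unfolding P2_def idx2_def by auto
  then show ?thesis using idx2_fin by simp
qed

lemma P3_fin: "finite (P3 vs)"
proof -
  have "P3 vs = (\<lambda>(x, y, z). cw_smul 3 (cw_mult (vs ! x) (cw_mult (vs ! y) (vs ! z)))) ` idx3 (length vs)"
  proof (rule set_eqI, rule iffI)
    fix w assume "w \<in> P3 vs"
    then obtain x y z where "w = cw_smul 3 (cw_mult (vs ! x) (cw_mult (vs ! y) (vs ! z)))" "x \<le> y" "y \<le> z" "z < length vs"
      unfolding P3_def by blast
    then show "w \<in> (\<lambda>(x, y, z). cw_smul 3 (cw_mult (vs ! x) (cw_mult (vs ! y) (vs ! z)))) ` idx3 (length vs)"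
      by (intro image_eqI[where x="(x, y, z)"]) (simp_all add: idx3_def)
  next
    fix w assume "w \<in> (\<lambda>(x, y, z). cw_smul 3 (cw_mult (vs ! x) (cw_mult (vs ! y) (vs ! z)))) ` idx3 (length vs)"
    then obtain p where p: "p \<in> idx3 (length vs)" "w = (\<lambda>(x, y, z). cw_smul 3 (cw_mult (vs ! x) (cw_mult (vs ! y) (vs ! z)))) p"
      by (rule imageE)
    obtain x y z where "p = (x, y, z)" by (cases p) auto
    then have "w = cw_smul 3 (cw_mult (vs ! x) (cw_mult (vs ! y) (vs ! z)))" "x \<le> y" "y \<le> z" "z < length vs"
      using p by (simp_all add: idx3_def)
    then show "w \<in> P3 vs" unfolding P3_def by blast
  qed
  then show ?thesis using idx3_fin by simp
qed

lemma Gset_card: "card (Gset us vs) \<le> length us + length vs + (length vs + 1 choose 2) + (length vs + 2 choose 3)"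
proof -
  have "card (Gset us vs) \<le> card (set us \<union> set vs \<union> P2 vs) + card (P3 vs)"
    unfolding Gset_def by (rule card_Un_le)
  also have "card (set us \<union> set vs \<union> P2 vs) \<le> card (set us \<union> set vs) + card (P2 vs)" by (rule card_Un_le)
  also have "card (set us \<union> set vs) \<le> card (set us) + card (set vs)" by (rule card_Un_le)
  finally show ?thesis using card_length[of us] card_length[of vs] P2_card[of vs] P3_card[of vs] by linarith
qed

lemma Gset_fin: "finite (Gset us vs)"
  unfolding Gset_def using P2_fin P3_fin by simp


theorem theorem5:
  fixes \<alpha> \<beta> \<gamma> \<delta> \<kappa> :: nat and C :: "(int list \<times> int list) set"
  assumes "code_type \<alpha> \<beta> \<gamma> \<delta> \<kappa> C"
  shows "(\<forall>us vs. is_gen_matrix \<alpha> \<beta> C us vs \<longrightarrow>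
            span3 (\<alpha> + 3 * \<beta>) (Phi ` C) =
            span3 (\<alpha> + 3 * \<beta>) (Phi ` (set us \<union> set vs
              \<union> {cw_smul 3 (cw_mult (vs ! k) (vs ! l)) | k l. l \<le> k \<and> k < length vs}
              \<union> {cw_smul 3 (cw_mult (vs ! x) (cw_mult (vs ! y) (vs ! z))) | x y z.
                   x \<le> y \<and> y \<le> z \<and> z < length vs})))
       \<and> (\<gamma> + 2 * \<delta> \<le> rank3 \<alpha> \<beta> C \<and>
          rank3 \<alpha> \<beta> C \<le> min (\<beta> + \<delta> + \<kappa>) (\<gamma> + \<delta> + ((\<delta> + 1) choose 2) + ((\<delta> + 2) choose 3)))
       \<and> (\<exists>D. additive_code \<alpha> \<beta> D \<and> span3 (\<alpha> + 3 * \<beta>) (Phi ` C) = Phi ` D)"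
proof -
  let ?N = "\<alpha> + 3 * \<beta>"
  let ?S = "span3 ?N (Phi ` C)"
  have C: "additive_code \<alpha> \<beta> C" using assms by (simp add: code_type_def)
  obtain us vs where gm: "is_gen_matrix \<alpha> \<beta> C us vs" and lu: "length us = \<gamma>" and lv: "length vs = \<delta>"
    using assms by (auto simp: code_type_def)
  have kap: "\<kappa> = dim3 \<alpha> (fst ` sub3 \<alpha> \<beta> C)" using assms by (simp add: code_type_def)
  have P1: "\<forall>us vs. is_gen_matrix \<alpha> \<beta> C us vs \<longrightarrow>
            ?S = span3 ?N (Phi ` (set us \<union> set vs
              \<union> {cw_smul 3 (cw_mult (vs ! k) (vs ! l)) | k l. l \<le> k \<and> k < length vs}
              \<union> {cw_smul 3 (cw_mult (vs ! x) (cw_mult (vs ! y) (vs ! z))) | x y z.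
                   x \<le> y \<and> y \<le> z \<and> z < length vs}))"
  proof (intro allI impI)
    fix us vs assume "is_gen_matrix \<alpha> \<beta> C us vs"
    from part_i[OF C this] show "?S = span3 ?N (Phi ` (set us \<union> set vs
              \<union> {cw_smul 3 (cw_mult (vs ! k) (vs ! l)) | k l. l \<le> k \<and> k < length vs}
              \<union> {cw_smul 3 (cw_mult (vs ! x) (cw_mult (vs ! y) (vs ! z))) | x y z.
                   x \<le> y \<and> y \<le> z \<and> z < length vs}))"
      unfolding Gset_def P2_def P3_def .
  qed
  have cl: "closed3 ?N ?S" by (rule SS_closed[OF C])
  have rk: "rank3 \<alpha> \<beta> C = dim3 ?N ?S" by (simp add: rank3_def)
  have cardS: "card ?S = 3 ^ dim3 ?N ?S" by (rule dim3_card[OF cl])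
  have Csp: "C \<subseteq> space \<alpha> \<beta>" using C by (simp add: additive_code_def)
  have injC: "inj_on Phi C" using inj_on_subset[OF Phi_inj Csp] .
  have lower: "\<gamma> + 2 * \<delta> \<le> dim3 ?N ?S"
  proof -
    have "card (Phi ` C) = 3 ^ (\<gamma> + 2 * \<delta>)" using card_image[OF injC] card_C[OF gm] lu lv by simp
    moreover have "card (Phi ` C) \<le> card ?S"
      using card_mono[OF closed3_finite[OF cl] span_sup[OF PhiC_vec[OF C]]] .
    ultimately have "(3::nat) ^ (\<gamma> + 2 * \<delta>) \<le> 3 ^ dim3 ?N ?S" using cardS by simp
    then show ?thesis by (simp add: power_increasing_iff)
  qed
  have up1: "dim3 ?N ?S \<le> \<beta> + \<delta> + \<kappa>"
  proof -
    have e: "?S = Phi ` DD \<alpha> \<beta> C" by (rule part_iii[OF C])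
    have "inj_on Phi (DD \<alpha> \<beta> C)" using inj_on_subset[OF Phi_inj] DD_sp[OF C] by blast
    then have "card ?S = card (DD \<alpha> \<beta> C)" using e card_image by metis
    also have "\<dots> \<le> 3 ^ \<delta> * (3 ^ \<kappa> * 3 ^ \<beta>)" using card_DD[OF C gm] lv kap by simp
    also have "\<dots> = 3 ^ (\<beta> + \<delta> + \<kappa>)" by (simp add: power_add)
    finally show ?thesis using dim3_le_iff[OF cl] by blast
  qed
  have up2: "dim3 ?N ?S \<le> \<gamma> + \<delta> + ((\<delta> + 1) choose 2) + ((\<delta> + 2) choose 3)"
  proof -
    have fin: "finite (Phi ` Gset us vs)" using Gset_fin by simp
    obtain xs where xs: "set xs = Phi ` Gset us vs" "distinct xs" using finite_distinct_list[OF fin] by blast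
    have "dim3 ?N ?S \<le> length xs"
    proof (rule dim3_le_list[OF cl])
      show "set xs \<subseteq> vec3 ?N" using xs PG_vec[OF C gm] by simp
      show "?S \<subseteq> span3 ?N (set xs)" using part_i[OF C gm] xs by simp
    qed
    also have "length xs = card (Phi ` Gset us vs)" using distinct_card[OF xs(2)] xs(1) by simp
    also have "\<dots> \<le> card (Gset us vs)" using card_image_le[OF Gset_fin] .
    also have "\<dots> \<le> \<gamma> + \<delta> + ((\<delta> + 1) choose 2) + ((\<delta> + 2) choose 3)" using Gset_card[of us vs] lu lv by simp
    finally show ?thesis .
  qed
  have P2: "\<gamma> + 2 * \<delta> \<le> rank3 \<alpha> \<beta> C \<and>
          rank3 \<alpha> \<beta> C \<le> min (\<beta> + \<delta> + \<kappa>) (\<gamma> + \<delta> + ((\<delta> + 1) choose 2) + ((\<delta> + 2) choose 3))"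
    using lower up1 up2 rk by simp
  have P3: "\<exists>D. additive_code \<alpha> \<beta> D \<and> ?S = Phi ` D"
    using DD_additive[OF C] part_iii[OF C] by blast
  show ?thesis using P1 P2 P3 by blast
qed


end
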